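(* Let $n\ge1$, $s\in(0,1)$, $p\in(1,\infty)$, and if $p<2$ assume $p>1/(1-s)$. Let $K:B_2\times\mathbb{R}^n\to[0,\infty)$ be measurable with $K(x,y)=K(x,-y)$ and suppose there are $\Lambda\ge\lambda>0$, $M>0$, $\gamma>0$ with $\lambda|y|^{-n-sp}\le K(x,y)\le\Lambda|y|^{-n-sp}$ for $x,y\in B_2$ and $0\le K(x,y)\le M|y|^{-n-\gamma}$ for $x\in B_2$, $y\in\mathbb{R}^n\setminus B_{1/4}$. Then for any $\delta>0$ there are $k\in(0,1/2]$ and $\eta>0$, depending on $\lambda,\Lambda,M,p,s,\gamma,\delta$, such that for every $x\in B_{3/4}$ the following holds: if $p\in(2,\infty)$, $$2^{p-2}k^{p-1}\operatorname{PV}\int_{x+y\in B_1}|\beta(x)-\beta(x+y)|^{p-2}(\beta(x)-\beta(x+y))K(x,y)\,dy+2^{p-2}\int_{\mathbb{R}^n\setminus B_{1/4}}|k\beta(x)+2(|8y|^\eta-1)|^{p-1}K(x,y)\,dy$$ $$+2^{p-1}\int_{\mathbb{R}^n\setminus B_{1/4}}(|8y|^\eta-1)^{p-1}K(x,y)\,dy<2^{1-p}\inf_{A\subset B_2,\,|A|>\delta}\int_AK(x,y)\,dy,$$ and if $p\in(1/(1-s),2)$, $$(3^{p-1}+2^{p-1})k^{p-1}\int_{\mathbb{R}^n}|\beta(x)-\beta(x+y)|^{p-1}K(x,y)\,dy+2^{p-1}\int_{\mathbb{R}^n\setminus B_{1/4}}(|8y|^\eta-1)^{p-1}K(x,y)\,dy<2^{1-p}\inf_{A\subset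 B_2,\,|A|>\delta}\int_AK(x,y)\,dy.$$
   Context: $B_r$ is the open ball of radius $r$ centred at the origin; $|A|$ is Lebesgue measure; the infimum is over measurable sets $A$. $\beta(x)=\big((1-|x|^2)^+\big)^2$. $\operatorname{PV}\int_{x+y\in B_1}$ means $\lim_{r\to0}\int_{\{x+y\in B_1\}\setminus B_r}$. *)

theory Defs
  imports "HOL-Analysis.Analysis"
begin

definition beta :: "'a::euclidean_space \<Rightarrow> real" where
  "beta x = (max 0 (1 - (norm x)\<^sup>2))\<^sup>2"

end

theory Submission
  imports Defs
begin


lemma beta_nonneg: "0 \<le> beta x" by (simp add: beta_def)
lemma beta_le1: "beta x \<le> 1"
  unfolding beta_def by (auto simp: max_def power_le_one)

lemma m_lip:
  fixes t u :: real assumes "0 \<le> t" "0 \<le> u"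
  shows "\<bar>(max 0 (1 - t))\<^sup>2 - (max 0 (1 - u))\<^sup>2\<bar> \<le> 2 * \<bar>t - u\<bar>"
proof -
  define a b where "a = max 0 (1-t)" and "b = max 0 (1-u)"
  have ab: "0 \<le> a" "a \<le> 1" "0 \<le> b" "b \<le> 1" using assms by (auto simp: a_def b_def)
  have d: "\<bar>a - b\<bar> \<le> \<bar>t - u\<bar>" by (auto simp: a_def b_def max_def)
  have "a\<^sup>2 - b\<^sup>2 = (a - b) * (a + b)" by (simp add: power2_eq_square algebra_simps)
  hence "\<bar>a\<^sup>2 - b\<^sup>2\<bar> = \<bar>a - b\<bar> * (a + b)" using ab by (simp add: abs_mult)
  also have "\<dots> \<le> \<bar>t - u\<bar> * 2" using ab d by (intro mult_mono) auto
  finally show ?thesis by (simp add: a_def b_def)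
qed

lemma beta_lip:
  fixes x y :: "'a::euclidean_space"
  assumes "norm x < 1" "norm y \<le> 1"
  shows "\<bar>beta x - beta (x + y)\<bar> \<le> 8 * norm y"
proof -
  have "\<bar>beta x - beta (x + y)\<bar> \<le> 2 * \<bar>(norm x)\<^sup>2 - (norm (x+y))\<^sup>2\<bar>"
    unfolding beta_def by (rule m_lip) auto
  also have "(norm x)\<^sup>2 - (norm (x+y))\<^sup>2 = (norm x - norm (x+y)) * (norm x + norm (x+y))"
    by (simp add: power2_eq_square algebra_simps)
  hence "\<bar>(norm x)\<^sup>2 - (norm (x+y))\<^sup>2\<bar> = \<bar>norm x - norm (x+y)\<bar> * (norm x + norm (x+y))"
    by (simp add: abs_mult)
  also have "\<dots> \<le> norm y * 4"
  proof (rule mult_mono)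
    show "\<bar>norm x - norm (x + y)\<bar> \<le> norm y"
      by (metis add_diff_cancel_left' norm_triangle_ineq3 norm_minus_commute)
    show "norm x + norm (x + y) \<le> 4" using assms norm_triangle_ineq[of x y] by linarith
  qed auto
  finally show ?thesis by simp
qed

lemma beta_inner: "norm z < 1 \<Longrightarrow> beta z = (1 - (norm z)\<^sup>2)\<^sup>2"
proof -
  assume "norm z < 1"
  hence "(norm z)\<^sup>2 \<le> 1" by (intro power_le_one) auto
  thus ?thesis unfolding beta_def by (simp add: max_def)
qed

lemma beta_second:
  fixes x y :: "'a::euclidean_space"
  assumes "norm x < 3/4" "norm y < 1/4"
  shows "\<bar>2 * beta x - beta (x + y) - beta (x - y)\<bar> \<le> 14 * (norm y)\<^sup>2"
proof -
  have n1: "norm (x+y) < 1" using assms norm_triangle_ineq[of x y] by linarith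
  have n2: "norm (x-y) < 1" using assms norm_triangle_ineq4[of x y] by linarith
  have n0: "norm x < 1" using assms by simp
  have e1: "(norm (x+y))\<^sup>2 = (norm x)\<^sup>2 + 2 * (x \<bullet> y) + (norm y)\<^sup>2"
    by (simp add: power2_norm_eq_inner inner_add algebra_simps inner_commute)
  have e2: "(norm (x-y))\<^sup>2 = (norm x)\<^sup>2 - 2 * (x \<bullet> y) + (norm y)\<^sup>2"
    by (simp add: power2_norm_eq_inner inner_diff algebra_simps inner_commute)
  define A B c where "A = (norm x)\<^sup>2" and "B = 2 * (x \<bullet> y)" and "c = (norm y)\<^sup>2"
  have eq: "2 * beta x - beta (x + y) - beta (x - y) = 4*c*(1-A) - 2*c\<^sup>2 - 2*B\<^sup>2"
    using n0 unfolding beta_inner[OF n1] beta_inner[OF n2] beta_inner[OF n0] e1 e2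
    using assms by (simp add: A_def B_def c_def power2_eq_square algebra_simps)
  have A: "0 \<le> A" "A \<le> 1" using assms by (auto simp: A_def abs_square_le_1)
  have "(4 * norm y)\<^sup>2 \<le> 1" using assms by (intro power_le_one) auto
  hence c: "0 \<le> c" "c \<le> 1/16" unfolding c_def by (auto simp: power_mult_distrib)
  have B: "B\<^sup>2 \<le> 4 * A * c"
  proof -
    have "\<bar>x \<bullet> y\<bar> \<le> norm x * norm y" by (rule Cauchy_Schwarz_ineq2)
    hence "(x \<bullet> y)\<^sup>2 \<le> (norm x * norm y)\<^sup>2" by (metis abs_ge_zero power2_abs power_mono)
    thus ?thesis by (simp add: B_def A_def c_def power_mult_distrib)
  qed
  have "\<bar>4*c*(1-A) - 2*c\<^sup>2 - 2*B\<^sup>2\<bar> \<le> 4*c + 2*c\<^sup>2 + 2*B\<^sup>2"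
  proof -
    have "0 \<le> c*(1-A)" "c*(1-A) \<le> c" using A c by (auto simp: mult_left_le)
    moreover have "0 \<le> c\<^sup>2" "0 \<le> B\<^sup>2" by auto
    ultimately show ?thesis by (intro abs_leI; simp only: mult.assoc; linarith)
  qed
  also have "\<dots> \<le> 4*c + 2*c + 8*c" using A c B
  proof -
    have "4 * A * c \<le> 4 * c" using A c by (simp add: mult_left_le_one_le)
    moreover have "c\<^sup>2 \<le> c" using c by (simp add: power2_eq_square mult_left_le)
    ultimately show ?thesis using B by linarith
  qed
  finally show ?thesis using eq by (simp add: c_def)
qed

lemma continuous_beta: "continuous_on UNIV (beta :: 'a::euclidean_space \<Rightarrow> real)"
  unfolding beta_def[abs_def] by (intro continuous_intros)



lemma phi_pos_case:
  fixes p u v m :: real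
  assumes p: "2 < p" and uv: "0 \<le> v" "v \<le> u" "u \<le> m"
  shows "u powr (p-2) * u - v powr (p-2) * v \<le> (p-1) * m powr (p-2) * (u - v)"
proof (cases "v = 0")
  case True
  have "u powr (p-2) * u \<le> m powr (p-2) * u" using uv p by (intro mult_right_mono powr_mono2) auto
  also have "\<dots> \<le> (p-1) * m powr (p-2) * u" using uv p
    by (intro mult_right_mono) (auto intro!: mult_le_cancel_right1[THEN iffD2])
  finally show ?thesis using True by simp
next
  case False
  hence v0: "0 < v" using uv by simp
  show ?thesis
  proof (cases "v = u")
    case True thus ?thesis by simp
  next
    case False
    hence vu: "v < u" using uv by simp
    have eq: "\<And>t. 0 < t \<Longrightarrow> t powr (p-2) * t = t powr (p-1)"
    proof -
      fix t :: real assume "0 < t"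
      have "t powr (p-1) = t powr ((p-2) + 1)" by simp
      also have "\<dots> = t powr (p-2) * t" using \<open>0 < t\<close> by (subst powr_add) simp
      finally show "t powr (p-2) * t = t powr (p-1)" by simp
    qed
    have "\<exists>z>v. z < u \<and> u powr (p-1) - v powr (p-1) = (u - v) * ((p-1) * z powr (p-1-1))"
      using vu v0 has_real_derivative_powr[of _ "p-1"] by (intro MVT2) auto
    then obtain z where z: "v < z" "z < u" "u powr (p-1) - v powr (p-1) = (u - v) * ((p-1) * z powr (p-1-1))"
      by blast
    have e: "p - 1 - 1 = p - 2" by simp
    have "z powr (p-1-1) \<le> m powr (p-2)" unfolding e using z v0 uv p by (intro powr_mono2) auto
    hence "(u - v) * ((p-1) * z powr (p-1-1)) \<le> (u-v) * ((p-1) * m powr (p-2))"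
      using vu p by (intro mult_left_mono) auto
    thus ?thesis using z(3) eq[of u] eq[of v] v0 vu by (simp add: algebra_simps)
  qed
qed

lemma phi_mono:
  fixes p u v :: real
  assumes p: "2 < p" and le: "v \<le> u"
  shows "\<bar>v\<bar> powr (p-2) * v \<le> \<bar>u\<bar> powr (p-2) * u"
proof -
  consider "v \<le> 0" "0 \<le> u" | "0 \<le> v" | "u \<le> 0" using le by linarith
  thus ?thesis
  proof cases
    case 1
    have "\<bar>v\<bar> powr (p-2) * v \<le> 0" using 1 by (simp add: mult_nonneg_nonpos)
    also have "0 \<le> \<bar>u\<bar> powr (p-2) * u" using 1 by simp
    finally show ?thesis .
  next
    case 2 thus ?thesis using le p by (intro mult_mono powr_mono2) auto
  next
    case 3
    have "\<bar>u\<bar> powr (p-2) * (-u) \<le> \<bar>v\<bar> powr (p-2) * (-v)" using 3 le p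
      by (intro mult_mono powr_mono2) auto
    thus ?thesis by simp
  qed
qed

lemma phi_lip:
  fixes p u v m :: real
  assumes p: "2 < p" and uv: "\<bar>u\<bar> \<le> m" "\<bar>v\<bar> \<le> m"
  shows "\<bar>\<bar>u\<bar> powr (p-2) * u - \<bar>v\<bar> powr (p-2) * v\<bar> \<le> (p-1) * m powr (p-2) * \<bar>u - v\<bar>"
proof -
  have m0: "0 \<le> m" using uv by linarith
  have gen: "\<bar>u\<bar> powr (p-2) * u - \<bar>v\<bar> powr (p-2) * v \<le> (p-1) * m powr (p-2) * (u - v)"
    if le: "v \<le> u" and uv: "\<bar>u\<bar> \<le> m" "\<bar>v\<bar> \<le> m" for u v
  proof -
    consider "0 \<le> v" | "u \<le> 0" | "v < 0" "0 < u" by linarith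
    thus ?thesis
    proof cases
      case 1
      hence "\<bar>u\<bar> = u" "\<bar>v\<bar> = v" using le by auto
      thus ?thesis using phi_pos_case[OF p 1 le, of m] uv by simp
    next
      case 2
      have "(-v) powr (p-2) * (-v) - (-u) powr (p-2) * (-u) \<le> (p-1) * m powr (p-2) * ((-v) - (-u))"
        using 2 le uv by (intro phi_pos_case[OF p]) auto
      moreover have "\<bar>u\<bar> = -u" "\<bar>v\<bar> = -v" using 2 le by auto
      moreover have "(p-1) * m powr (p-2) * ((-v) - (-u)) = (p-1) * m powr (p-2) * (u - v)" by simp
      ultimately show ?thesis by (simp only:)
    next
      case 3
      have a: "\<bar>u\<bar> powr (p-2) * u \<le> m powr (p-2) * u" using 3 uv p
        by (intro mult_right_mono powr_mono2) auto
      have b: "- (\<bar>v\<bar> powr (p-2) * v) \<le> m powr (p-2) * (-v)" using 3 uv p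
        by (simp, intro mult_right_mono powr_mono2) auto
      have c: "m powr (p-2) * (u - v) \<le> (p-1) * m powr (p-2) * (u - v)" using 3 p
        by (intro mult_right_mono) (auto intro!: mult_le_cancel_right1[THEN iffD2])
      show ?thesis using a b c by (simp add: algebra_simps)
    qed
  qed
  show ?thesis
  proof (cases "v \<le> u")
    case True
    hence "\<bar>u - v\<bar> = u - v" by simp
    moreover have "0 \<le> (p-1) * m powr (p-2) * (u - v)" using True p by simp
    ultimately show ?thesis using gen[OF True uv] phi_mono[OF p True] by (intro abs_leI) auto
  next
    case False
    hence F: "u \<le> v" by simp
    hence "\<bar>u - v\<bar> = v - u" by simp
    moreover have "0 \<le> (p-1) * m powr (p-2) * (v - u)" using F p by simp
    ultimately show ?thesis using gen[OF F uv(2,1)] phi_mono[OF p F] by (intro abs_leI) auto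
  qed
qed



lemma ball_borel[measurable]: "ball (c::'a::euclidean_space) r \<in> sets borel"
  by simp

lemma borel_to_leb: "f \<in> borel_measurable (borel::'a::euclidean_space measure) \<Longrightarrow> f \<in> borel_measurable lebesgue"
  by (intro measurable_completion) simp

lemma ball_leb: "ball (c::'a::euclidean_space) r \<in> sets lebesgue"
  by (intro fmeasurableD lmeasurable_ball)

lemma pow_powr: "0 < (x::real) \<Longrightarrow> (x ^ j) powr a = (x powr a) ^ j"
  by (simp add: powr_realpow[symmetric] powr_powr mult.commute)

lemma emeasure_ball_lebesgue:
  assumes "0 \<le> r"
  shows "emeasure lebesgue (ball (0::'a::euclidean_space) r) =
    ennreal (r ^ DIM('a) * measure lebesgue (ball (0::'a) 1))"
proof -
  have "emeasure lebesgue (ball (0::'a) 1) = measure lebesgue (ball (0::'a) 1)"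
    by (intro emeasure_eq_measure2 lmeasurable_ball)
  thus ?thesis using emeasure_lebesgue_ball_conv_unit_ball[OF assms, of "0::'a"] assms
    by (simp add: ennreal_mult)
qed

lemma ennreal_le_suminf: "(f::nat \<Rightarrow> ennreal) j \<le> suminf f"
  by (metis ennreal_suminf_lessD less_irrefl not_le)

lemma geom_ennreal_fin:
  fixes C q :: real assumes "0 \<le> C" "0 \<le> q" "q < 1"
  shows "(\<Sum>j. ennreal (C * q ^ j)) < \<infinity>"
proof -
  have "summable (\<lambda>j. C * q ^ j)" using assms by (intro summable_mult summable_geometric) auto
  hence "(\<Sum>j. ennreal (C * q ^ j)) = ennreal (\<Sum>j. C * q ^ j)"
    using assms by (intro suminf_ennreal2) auto
  thus ?thesis by simp
qed

lemma exists_shell_inner: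
  fixes t R :: real assumes "0 < t" "t < R"
  shows "\<exists>j. R * (1/2) ^ Suc j \<le> t \<and> t < R * (1/2) ^ j"
proof -
  have R: "0 < R" using assms by simp
  obtain n where n: "(1/2::real) ^ n < t / R" using real_arch_pow_inv[of "t/R" "1/2"] assms by auto
  hence "R * (1/2) ^ n \<le> t" using R by (simp add: field_simps)
  moreover have "\<not> R * (1/2) ^ 0 \<le> t" using assms by simp
  ultimately obtain k where "k < n" "\<forall>i\<le>k. \<not> R * (1/2) ^ i \<le> t" "R * (1/2) ^ Suc k \<le> t"
    using ex_least_nat_less[of "\<lambda>k. R * (1/2) ^ k \<le> t" n] by blast
  thus ?thesis by (intro exI[of _ k]) auto
qed

lemma exists_shell_outer:
  fixes t R :: real assumes "0 < R" "R \<le> t"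
  shows "\<exists>j. R * 2 ^ j \<le> t \<and> t < R * 2 ^ Suc j"
proof -
  obtain n where n: "t / R < (2::real) ^ n" using real_arch_pow[of 2 "t/R"] by auto
  hence "t < R * 2 ^ n" using assms by (simp add: field_simps)
  moreover have "\<not> t < R * 2 ^ 0" using assms by simp
  ultimately obtain k where "k < n" "\<forall>i\<le>k. \<not> t < R * 2 ^ i" "t < R * 2 ^ Suc k"
    using ex_least_nat_less[of "\<lambda>k. t < R * 2 ^ k" n] by blast
  thus ?thesis by (intro exI[of _ k]) auto
qed

lemma inner_nn:
  fixes R a :: real
  assumes R: "0 < R" and a: "0 \<le> a" "a < DIM('a)"
  shows "(\<integral>\<^sup>+ y. ennreal (indicator (ball (0::'a::euclidean_space) R) y * norm y powr (-a)) \<partial>lebesgue) < \<infinity>"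
proof -
  define n where "n = DIM('a)"
  define V where "V = measure lebesgue (ball (0::'a) 1)"
  have V: "0 \<le> V" by (simp add: V_def)
  define c where "c j = (R * (1/2) ^ Suc j) powr (-a)" for j :: nat
  define r where "r j = R * (1/2) ^ j" for j :: nat
  have r0: "0 < r j" for j using R by (simp add: r_def)
  have pw: "ennreal (indicator (ball (0::'a) R) y * norm y powr (-a))
      \<le> (\<Sum>j. ennreal (c j) * indicator (ball (0::'a) (r j)) y)" for y
  proof (cases "y \<in> ball 0 R \<and> y \<noteq> 0")
    case True
    then obtain j where j: "R * (1/2) ^ Suc j \<le> norm y" "norm y < R * (1/2) ^ j"
      using exists_shell_inner[of "norm y" R] by auto
    have "ennreal (indicator (ball (0::'a) R) y * norm y powr (-a)) = ennreal (norm y powr (-a))"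
      using True by simp
    also have "\<dots> \<le> ennreal (c j)" unfolding c_def using j a R
      by (intro ennreal_leI powr_mono2') auto
    also have "\<dots> = ennreal (c j) * indicator (ball (0::'a) (r j)) y"
      using j by (simp add: r_def)
    also have "\<dots> \<le> (\<Sum>j. ennreal (c j) * indicator (ball (0::'a) (r j)) y)"
      by (rule ennreal_le_suminf)
    finally show ?thesis .
  next
    case False
    hence "indicator (ball (0::'a) R) y * norm y powr (-a) = 0" by auto
    thus ?thesis by (metis ennreal_0 zero_le)
  qed
  have "(\<integral>\<^sup>+ y. ennreal (indicator (ball (0::'a) R) y * norm y powr (-a)) \<partial>lebesgue)
      \<le> (\<integral>\<^sup>+ y. (\<Sum>j. ennreal (c j) * indicator (ball (0::'a) (r j)) y) \<partial>lebesgue)"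
    by (intro nn_integral_mono pw)
  also have "\<dots> = (\<Sum>j. \<integral>\<^sup>+ y. ennreal (c j) * indicator (ball (0::'a) (r j)) y \<partial>lebesgue)"
    by (intro nn_integral_suminf) (intro borel_to_leb, measurable)
  also have "\<dots> = (\<Sum>j. ennreal (c j * (r j ^ n * V)))"
  proof -
    have "(\<integral>\<^sup>+ y. ennreal (c j) * indicator (ball (0::'a) (r j)) y \<partial>lebesgue)
       = ennreal (c j * (r j ^ n * V))" for j
    proof -
      have "(\<integral>\<^sup>+ y. ennreal (c j) * indicator (ball (0::'a) (r j)) y \<partial>lebesgue)
          = ennreal (c j) * emeasure lebesgue (ball (0::'a) (r j))"
        by (rule nn_integral_cmult_indicator) (rule ball_leb)
      also have "\<dots> = ennreal (c j) * ennreal (r j ^ n * V)"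
        using emeasure_ball_lebesgue[of "r j", where 'a='a] r0[of j] unfolding V_def n_def by simp
      also have "\<dots> = ennreal (c j * (r j ^ n * V))" using r0[of j] V
        by (simp add: ennreal_mult c_def)
      finally show ?thesis .
    qed
    thus ?thesis by simp
  qed
  also have "\<dots> = (\<Sum>j. ennreal (((R/2) powr (-a) * R ^ n * V) * ((1/2) powr (-a) * (1/2) ^ n) ^ j))"
  proof -
    have "c j * (r j ^ n * V) = ((R/2) powr (-a) * R ^ n * V) * ((1/2) powr (-a) * (1/2) ^ n) ^ j" for j
    proof -
      have "R * (1/2) ^ Suc j = (R/2) * (1/2) ^ j" by simp
      hence "c j = ((R/2) * (1/2) ^ j) powr (-a)" unfolding c_def by simp
      also have "\<dots> = (R/2) powr (-a) * ((1/2) ^ j) powr (-a)" using R by (intro powr_mult; simp)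
      also have "\<dots> = (R/2) powr (-a) * ((1/2) powr (-a)) ^ j" by (simp add: pow_powr)
      finally have "c j = (R/2) powr (-a) * ((1/2) powr (-a)) ^ j" .
      moreover have "r j ^ n = R ^ n * ((1/2)^n) ^ j" unfolding r_def
        by (simp add: power_mult_distrib power_mult[symmetric] mult.commute)
      ultimately show ?thesis by (simp add: power_mult_distrib mult_ac)
    qed
    thus ?thesis by (simp only:)
  qed
  also have "\<dots> < \<infinity>"
  proof (rule geom_ennreal_fin)
    show "0 \<le> (R/2) powr (-a) * R ^ n * V" using R V by simp
    show "0 \<le> (1/2) powr (-a) * (1/2::real) ^ n" by simp
    have "(1/2::real) ^ n = (1/2) powr (real n)" by (simp add: powr_realpow)
    hence "(1/2::real) powr (-a) * (1/2) ^ n = (1/2) powr (-a + real n)"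
      by (simp only: powr_add[symmetric])
    also have "\<dots> < 1" using a by (subst powr01_less_one) (auto simp: n_def)
    finally show "(1/2) powr (-a) * (1/2::real) ^ n < 1" .
  qed
  finally show ?thesis .
qed

lemma outer_nn:
  fixes R a :: real
  assumes R: "0 < R" and a: "DIM('a) < a"
  shows "(\<integral>\<^sup>+ y. ennreal (indicator (UNIV - ball (0::'a::euclidean_space) R) y * norm y powr (-a)) \<partial>lebesgue) < \<infinity>"
proof -
  define n where "n = DIM('a)"
  define V where "V = measure lebesgue (ball (0::'a) 1)"
  have V: "0 \<le> V" by (simp add: V_def)
  define c where "c j = (R * 2 ^ j) powr (-a)" for j :: nat
  define r where "r j = R * 2 ^ Suc j" for j :: nat
  have r0: "0 < r j" for j using R by (simp add: r_def)
  have pw: "ennreal (indicator (UNIV - ball (0::'a) R) y * norm y powr (-a))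
      \<le> (\<Sum>j. ennreal (c j) * indicator (ball (0::'a) (r j)) y)" for y
  proof (cases "y \<notin> ball 0 R")
    case True
    then obtain j where j: "R * 2 ^ j \<le> norm y" "norm y < R * 2 ^ Suc j"
      using exists_shell_outer[of R "norm y"] R by auto
    have "ennreal (indicator (UNIV - ball (0::'a) R) y * norm y powr (-a)) = ennreal (norm y powr (-a))"
      using True by simp
    also have "\<dots> \<le> ennreal (c j)" unfolding c_def using j a R
      by (intro ennreal_leI powr_mono2') auto
    also have "\<dots> = ennreal (c j) * indicator (ball (0::'a) (r j)) y"
      using j by (simp add: r_def)
    also have "\<dots> \<le> (\<Sum>j. ennreal (c j) * indicator (ball (0::'a) (r j)) y)"
      by (rule ennreal_le_suminf)
    finally show ?thesis .
  next
    case False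
    hence "indicator (UNIV - ball (0::'a) R) y * norm y powr (-a) = 0" by auto
    thus ?thesis by (metis ennreal_0 zero_le)
  qed
  have "(\<integral>\<^sup>+ y. ennreal (indicator (UNIV - ball (0::'a) R) y * norm y powr (-a)) \<partial>lebesgue)
      \<le> (\<integral>\<^sup>+ y. (\<Sum>j. ennreal (c j) * indicator (ball (0::'a) (r j)) y) \<partial>lebesgue)"
    by (intro nn_integral_mono pw)
  also have "\<dots> = (\<Sum>j. \<integral>\<^sup>+ y. ennreal (c j) * indicator (ball (0::'a) (r j)) y \<partial>lebesgue)"
    by (intro nn_integral_suminf) (intro borel_to_leb, measurable)
  also have "\<dots> = (\<Sum>j. ennreal (c j * (r j ^ n * V)))"
  proof -
    have "(\<integral>\<^sup>+ y. ennreal (c j) * indicator (ball (0::'a) (r j)) y \<partial>lebesgue)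
       = ennreal (c j * (r j ^ n * V))" for j
    proof -
      have "(\<integral>\<^sup>+ y. ennreal (c j) * indicator (ball (0::'a) (r j)) y \<partial>lebesgue)
          = ennreal (c j) * emeasure lebesgue (ball (0::'a) (r j))"
        by (rule nn_integral_cmult_indicator) (rule ball_leb)
      also have "\<dots> = ennreal (c j) * ennreal (r j ^ n * V)"
        using emeasure_ball_lebesgue[of "r j", where 'a='a] r0[of j] unfolding V_def n_def by simp
      also have "\<dots> = ennreal (c j * (r j ^ n * V))" using r0[of j] V
        by (simp add: ennreal_mult c_def)
      finally show ?thesis .
    qed
    thus ?thesis by simp
  qed
  also have "\<dots> = (\<Sum>j. ennreal ((R powr (-a) * (2*R) ^ n * V) * (2 powr (-a) * 2 ^ n) ^ j))"
  proof -
    have "c j * (r j ^ n * V) = (R powr (-a) * (2*R) ^ n * V) * (2 powr (-a) * 2 ^ n) ^ j" for j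
    proof -
      have "c j = R powr (-a) * (2 ^ j) powr (-a)" unfolding c_def using R by (intro powr_mult; simp)
      also have "\<dots> = R powr (-a) * (2 powr (-a)) ^ j" by (simp add: pow_powr)
      finally have "c j = R powr (-a) * (2 powr (-a)) ^ j" .
      moreover have "r j ^ n = (2*R) ^ n * (2^n) ^ j" unfolding r_def
        by (simp add: power_mult_distrib power_mult[symmetric] mult.commute)
      ultimately show ?thesis by (simp add: power_mult_distrib mult_ac)
    qed
    thus ?thesis by (simp only:)
  qed
  also have "\<dots> < \<infinity>"
  proof (rule geom_ennreal_fin)
    show "0 \<le> R powr (-a) * (2*R) ^ n * V" using R V by simp
    show "0 \<le> 2 powr (-a) * (2::real) ^ n" by simp
    have "(2::real) ^ n = 2 powr (real n)" by (simp add: powr_realpow)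
    hence "(2::real) powr (-a) * 2 ^ n = 2 powr (-a + real n)"
      by (simp only: powr_add[symmetric])
    also have "\<dots> < 1" using a by (intro powr_less_one) (auto simp: n_def)
    finally show "2 powr (-a) * (2::real) ^ n < 1" .
  qed
  finally show ?thesis .
qed



lemma sect_meas:
  fixes K :: "'a::euclidean_space \<Rightarrow> 'a \<Rightarrow> real"
  assumes "(\<lambda>z. K (fst z) (snd z)) \<in> borel_measurable (restrict_space borel (ball 0 2 \<times> UNIV))"
    and "x \<in> ball 0 2"
  shows "K x \<in> borel_measurable lebesgue"
proof -
  have "(\<lambda>y::'a. (x, y)) \<in> borel \<rightarrow>\<^sub>M borel"
    by (intro borel_measurable_continuous_onI continuous_intros)
  hence "(\<lambda>y::'a. (x, y)) \<in> borel \<rightarrow>\<^sub>M restrict_space borel (ball 0 2 \<times> UNIV)"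
    using assms(2) by (intro measurable_restrict_space2) auto
  from measurable_compose[OF this assms(1)] have "K x \<in> borel_measurable borel" by simp
  hence "K x \<in> borel_measurable lborel" by simp
  thus ?thesis by (rule measurable_completion)
qed

lemma beta_meas[measurable]: "beta \<in> borel_measurable (borel :: 'a::euclidean_space measure)"
  by (intro borel_measurable_continuous_onI continuous_beta)

lemma beta_meas_leb[measurable]: "beta \<in> borel_measurable (lebesgue :: 'a::euclidean_space measure)"
  using beta_meas[where 'a='a] by (intro measurable_completion) simp


lemma uminus_leb: "distr lebesgue lebesgue uminus = (lebesgue :: 'a::euclidean_space measure)"
proof -
  note L = lebesgue_affine_euclidean(1)[where c="\<lambda>_::'a. -1" and t=0]
  moreover have "(\<lambda>x::'a. 0 + (\<Sum>j\<in>Basis. ((-1) * (x \<bullet> j)) *\<^sub>R j)) = uminus"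
    by (rule ext) (simp add: sum_negf euclidean_representation)
  ultimately show ?thesis using L by (simp add: density_1)
qed



definition OutS :: "'a::euclidean_space set" where "OutS = UNIV - ball 0 (1/4)"

lemma OutS_borel[measurable]: "OutS \<in> sets borel" unfolding OutS_def by simp

lemma int_out:
  assumes "real DIM('a) < a"
  shows "integrable lebesgue (\<lambda>y::'a::euclidean_space. indicator OutS y * norm y powr (-a))"
proof (rule integrableI_nonneg)
  show "(\<lambda>y::'a. indicator OutS y * norm y powr (-a)) \<in> borel_measurable lebesgue"
    by (intro borel_to_leb) measurable
  show "AE y in lebesgue. 0 \<le> indicator OutS y * norm (y::'a) powr (-a)" by simp
  show "(\<integral>\<^sup>+ y. ennreal (indicator OutS y * norm (y::'a) powr (-a)) \<partial>lebesgue) < \<infinity>"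
    using outer_nn[of "1/4" a, where 'a='a] assms unfolding OutS_def by simp
qed

lemma int_in:
  assumes "0 \<le> a" "a < real DIM('a)"
  shows "integrable lebesgue (\<lambda>y::'a::euclidean_space. indicator (ball 0 (1/4)) y * norm y powr (-a))"
proof (rule integrableI_nonneg)
  show "(\<lambda>y::'a. indicator (ball 0 (1/4)) y * norm y powr (-a)) \<in> borel_measurable lebesgue"
    by (intro borel_to_leb) measurable
  show "AE y in lebesgue. 0 \<le> indicator (ball 0 (1/4)) y * norm (y::'a) powr (-a)" by simp
  show "(\<integral>\<^sup>+ y. ennreal (indicator (ball 0 (1/4)) y * norm (y::'a) powr (-a)) \<partial>lebesgue) < \<infinity>"
    using inner_nn[of "1/4" a, where 'a='a] assms by simp
qed

lemma uminus_meas_leb: "(uminus :: 'a::euclidean_space \<Rightarrow> 'a) \<in> lebesgue \<rightarrow>\<^sub>M lebesgue"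
proof -
  have "(\<lambda>x::'a. 0 + (\<Sum>j\<in>Basis. ((-1) * (x \<bullet> j)) *\<^sub>R j)) \<in> lebesgue \<rightarrow>\<^sub>M lebesgue"
    by (rule lebesgue_affine_measurable) auto
  moreover have "(\<lambda>x::'a. 0 + (\<Sum>j\<in>Basis. ((-1) * (x \<bullet> j)) *\<^sub>R j)) = uminus"
    by (rule ext) (simp add: sum_negf euclidean_representation)
  ultimately show ?thesis by simp
qed

lemma integral_reflect_leb:
  fixes f :: "'a::euclidean_space \<Rightarrow> real"
  assumes "f \<in> borel_measurable lebesgue"
  shows "integral\<^sup>L lebesgue (\<lambda>y. f (- y)) = integral\<^sup>L lebesgue f"
proof -
  have "integral\<^sup>L lebesgue f = integral\<^sup>L (distr lebesgue lebesgue uminus) f" by (simp add: uminus_leb)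
  also have "\<dots> = integral\<^sup>L lebesgue (\<lambda>y. f (- y))"
    by (rule integral_distr[OF uminus_meas_leb assms])
  finally show ?thesis by simp
qed

lemma integrable_reflect_leb:
  fixes f :: "'a::euclidean_space \<Rightarrow> real"
  assumes "integrable lebesgue f"
  shows "integrable lebesgue (\<lambda>y. f (- y))"
proof -
  have "integrable (distr lebesgue lebesgue uminus) f" using assms by (simp add: uminus_leb)
  thus ?thesis using integrable_distr_eq[OF uminus_meas_leb borel_measurable_integrable[OF assms]] by simp
qed

lemma AE_leb_ne0: "AE y in lebesgue. (y::'a::euclidean_space) \<noteq> 0"
  by (rule AE_completion[OF AE_lborel_singleton])

lemma ereal_fin_ineq:
  fixes I :: ennreal and L c d :: real
  assumes "L < c * d" "0 < c" "0 < d" "ennreal d \<le> I"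
  shows "ereal L < ereal c * enn2ereal I"
proof -
  have "ereal d \<le> enn2ereal I" using assms(3,4)
    by (metis enn2ereal_ennreal less_eq_ennreal.rep_eq less_imp_le)
  hence "ereal c * ereal d \<le> ereal c * enn2ereal I" using assms(2)
    by (intro ereal_mult_left_mono) auto
  moreover have "ereal L < ereal c * ereal d" using assms(1) by simp
  ultimately show ?thesis by order
qed



definition Efun :: "real \<Rightarrow> real \<Rightarrow> real \<Rightarrow> 'a::euclidean_space \<Rightarrow> real" where
  "Efun p \<gamma> \<eta> y = indicator OutS y * ((norm (8 *\<^sub>R y) powr \<eta> - 1) powr (p - 1) * norm y powr (- real DIM('a) - \<gamma>))"

lemma Efun_meas[measurable]: "Efun p \<gamma> \<eta> \<in> borel_measurable (borel :: 'a::euclidean_space measure)"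
  unfolding Efun_def[abs_def] by measurable

lemma OutS_mem: "y \<in> OutS \<longleftrightarrow> 1/4 \<le> norm y" by (auto simp: OutS_def)

lemma g_bounds:
  fixes y :: "'a::euclidean_space"
  assumes "y \<in> OutS" "0 < \<eta>"
  shows "0 \<le> norm (8 *\<^sub>R y) powr \<eta> - 1" "norm (8 *\<^sub>R y) powr \<eta> - 1 \<le> norm (8 *\<^sub>R y) powr \<eta>"
    "1 \<le> norm (8 *\<^sub>R y)"
proof -
  show n: "1 \<le> norm (8 *\<^sub>R y)" using assms by (simp add: OutS_mem)
  have "1 powr \<eta> \<le> norm (8 *\<^sub>R y) powr \<eta>" using n assms by (intro powr_mono2) auto
  thus "0 \<le> norm (8 *\<^sub>R y) powr \<eta> - 1" by simp
  show "norm (8 *\<^sub>R y) powr \<eta> - 1 \<le> norm (8 *\<^sub>R y) powr \<eta>" by simp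
qed

lemma Efun_bound:
  fixes y :: "'a::euclidean_space"
  assumes p: "1 < p" and g: "0 < \<gamma>" and eta: "0 < \<eta>" "\<eta> * (p - 1) \<le> \<gamma> / 2"
  shows "0 \<le> Efun p \<gamma> \<eta> y"
    "Efun p \<gamma> \<eta> y \<le> 8 powr (\<gamma>/2) * (indicator OutS y * norm y powr (-(real DIM('a) + \<gamma>/2)))"
proof -
  show "0 \<le> Efun p \<gamma> \<eta> y" unfolding Efun_def by simp
  show "Efun p \<gamma> \<eta> y \<le> 8 powr (\<gamma>/2) * (indicator OutS y * norm y powr (-(real DIM('a) + \<gamma>/2)))"
  proof (cases "y \<in> OutS")
    case False thus ?thesis by (simp add: Efun_def)
  next
    case True
    note gb = g_bounds[OF True eta(1)]
    have y0: "0 < norm y" using True by (auto simp: OutS_mem)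
    have "(norm (8 *\<^sub>R y) powr \<eta> - 1) powr (p - 1) \<le> (norm (8 *\<^sub>R y) powr \<eta>) powr (p - 1)"
      using gb p by (intro powr_mono2) auto
    also have "\<dots> = norm (8 *\<^sub>R y) powr (\<eta> * (p - 1))" by (simp add: powr_powr)
    also have "\<dots> \<le> norm (8 *\<^sub>R y) powr (\<gamma>/2)" using gb eta by (intro powr_mono) auto
    also have "\<dots> = 8 powr (\<gamma>/2) * norm y powr (\<gamma>/2)" by (simp add: powr_mult)
    finally have a: "(norm (8 *\<^sub>R y) powr \<eta> - 1) powr (p - 1) \<le> 8 powr (\<gamma>/2) * norm y powr (\<gamma>/2)" .
    have "Efun p \<gamma> \<eta> y = (norm (8 *\<^sub>R y) powr \<eta> - 1) powr (p - 1) * norm y powr (- real DIM('a) - \<gamma>)"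
      using True by (simp add: Efun_def)
    also have "\<dots> \<le> 8 powr (\<gamma>/2) * norm y powr (\<gamma>/2) * norm y powr (- real DIM('a) - \<gamma>)"
      using a by (intro mult_right_mono) auto
    also have "\<dots> = 8 powr (\<gamma>/2) * norm y powr (\<gamma>/2 + (- real DIM('a) - \<gamma>))"
      by (simp only: mult.assoc powr_add[symmetric])
    also have "\<gamma>/2 + (- real DIM('a) - \<gamma>) = -(real DIM('a) + \<gamma>/2)" by simp
    finally show ?thesis using True by simp
  qed
qed

lemma Efun_integrable:
  assumes p: "1 < p" and g: "0 < \<gamma>" and eta: "0 < \<eta>" "\<eta> * (p - 1) \<le> \<gamma> / 2"
  shows "integrable lebesgue (Efun p \<gamma> \<eta> :: 'a::euclidean_space \<Rightarrow> real)"
proof (rule Bochner_Integration.integrable_bound)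
  show "integrable lebesgue (\<lambda>y::'a. 8 powr (\<gamma>/2) * (indicator OutS y * norm y powr (-(real DIM('a) + \<gamma>/2))))"
    using int_out[of "real DIM('a) + \<gamma>/2", where 'a='a] g by simp
  show "Efun p \<gamma> \<eta> \<in> borel_measurable (lebesgue :: 'a measure)" by (intro borel_to_leb) measurable
  show "AE y in lebesgue. norm (Efun p \<gamma> \<eta> y) \<le> norm (8 powr (\<gamma>/2) * (indicator OutS y * norm (y::'a) powr (-(real DIM('a) + \<gamma>/2))))"
  proof (intro always_eventually allI)
    fix y :: 'a show "norm (Efun p \<gamma> \<eta> y) \<le> norm (8 powr (\<gamma>/2) * (indicator OutS y * norm (y::'a) powr (-(real DIM('a) + \<gamma>/2))))"
      using Efun_bound[OF assms, of y] by (simp add: abs_of_nonneg)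
  qed
qed

lemma Efun_lim:
  assumes p: "1 < p" and g: "0 < \<gamma>"
  defines "\<eta>0 \<equiv> \<gamma> / (2 * (p - 1))"
  shows "(\<lambda>m. integral\<^sup>L lebesgue (Efun p \<gamma> (\<eta>0 / real (Suc m)) :: 'a::euclidean_space \<Rightarrow> real)) \<longlonglongrightarrow> 0"
proof -
  have e0: "0 < \<eta>0" using p g by (simp add: \<eta>0_def)
  have em: "0 < \<eta>0 / real (Suc m)" "(\<eta>0 / real (Suc m)) * (p - 1) \<le> \<gamma> / 2" for m
  proof -
    show "0 < \<eta>0 / real (Suc m)" using e0 by simp
    have "(\<eta>0 / real (Suc m)) * (p - 1) \<le> \<eta>0 * (p - 1)" using e0 p
      by (intro mult_right_mono) (auto simp: field_simps)
    also have "\<dots> = \<gamma> / 2" using p by (simp add: \<eta>0_def field_simps)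
    finally show "(\<eta>0 / real (Suc m)) * (p - 1) \<le> \<gamma> / 2" .
  qed
  have "(\<lambda>m. integral\<^sup>L lebesgue (Efun p \<gamma> (\<eta>0 / real (Suc m)) :: 'a \<Rightarrow> real)) \<longlonglongrightarrow> integral\<^sup>L lebesgue (\<lambda>y::'a. 0)"
  proof (rule integral_dominated_convergence)
    show "(\<lambda>y::'a. 0::real) \<in> borel_measurable lebesgue" by simp
    show "Efun p \<gamma> (\<eta>0 / real (Suc m)) \<in> borel_measurable (lebesgue :: 'a measure)" for m
      by (intro borel_to_leb) measurable
    show "integrable lebesgue (\<lambda>y::'a. 8 powr (\<gamma>/2) * (indicator OutS y * norm y powr (-(real DIM('a) + \<gamma>/2))))"
      using int_out[of "real DIM('a) + \<gamma>/2", where 'a='a] g by simp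
    show "AE y in lebesgue. norm (Efun p \<gamma> (\<eta>0 / real (Suc m)) y) \<le> 8 powr (\<gamma>/2) * (indicator OutS y * norm (y::'a) powr (-(real DIM('a) + \<gamma>/2)))" for m
    proof (intro always_eventually allI)
      fix y :: 'a show "norm (Efun p \<gamma> (\<eta>0 / real (Suc m)) y) \<le> 8 powr (\<gamma>/2) * (indicator OutS y * norm (y::'a) powr (-(real DIM('a) + \<gamma>/2)))"
        using Efun_bound[OF p g em(1)[of m] em(2)[of m], of y] by (simp add: abs_of_nonneg)
    qed
    show "AE y in lebesgue. (\<lambda>m. Efun p \<gamma> (\<eta>0 / real (Suc m)) (y::'a)) \<longlonglongrightarrow> 0"
    proof (intro always_eventually allI)
      fix y :: 'a
      show "(\<lambda>m. Efun p \<gamma> (\<eta>0 / real (Suc m)) y) \<longlonglongrightarrow> 0"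
      proof (cases "y \<in> OutS")
        case False thus ?thesis by (simp add: Efun_def)
      next
        case True
        have n1: "1 \<le> norm (8 *\<^sub>R y)" using g_bounds[OF True e0] by simp
        have lim0: "(\<lambda>m. \<eta>0 / real (Suc m)) \<longlonglongrightarrow> 0"
          using LIMSEQ_Suc[OF lim_const_over_n[of \<eta>0]] by simp
        have "(\<lambda>m. norm (8 *\<^sub>R y) powr (\<eta>0 / real (Suc m))) \<longlonglongrightarrow> norm (8 *\<^sub>R y) powr 0"
          using n1 by (intro tendsto_powr tendsto_const lim0) auto
        moreover have "norm (8 *\<^sub>R y) powr 0 = 1"
        proof -
          have "norm (8 *\<^sub>R y) \<noteq> 0" using n1 by linarith
          thus ?thesis by (simp only: powr_zero_eq_one if_False)
        qed
        ultimately have L: "(\<lambda>m. norm (8 *\<^sub>R y) powr (\<eta>0 / real (Suc m))) \<longlonglongrightarrow> 1" by simp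
        have "(\<lambda>m. norm (8 *\<^sub>R y) powr (\<eta>0 / real (Suc m)) - 1) \<longlonglongrightarrow> 1 - 1"
          by (intro tendsto_diff L tendsto_const)
        hence "(\<lambda>m. norm (8 *\<^sub>R y) powr (\<eta>0 / real (Suc m)) - 1) \<longlonglongrightarrow> 0" by simp
        hence "(\<lambda>m. (norm (8 *\<^sub>R y) powr (\<eta>0 / real (Suc m)) - 1) powr (p - 1)) \<longlonglongrightarrow> 0"
          using g_bounds(1)[OF True em(1)] p by (intro tendsto_zero_powrI tendsto_const) auto
        hence "(\<lambda>m. (norm (8 *\<^sub>R y) powr (\<eta>0 / real (Suc m)) - 1) powr (p - 1) * norm y powr (- real DIM('a) - \<gamma>)) \<longlonglongrightarrow> 0 * norm y powr (- real DIM('a) - \<gamma>)"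
          by (intro tendsto_mult tendsto_const)
        thus ?thesis using True by (simp add: Efun_def)
      qed
    qed
  qed
  thus ?thesis by simp
qed



lemma sum_powr_bound:
  fixes a k g q :: real
  assumes "0 \<le> a" "a \<le> k" "0 \<le> g" "0 < q"
  shows "\<bar>a + 2*g\<bar> powr q \<le> 2 powr q * k powr q + 4 powr q * g powr q"
proof -
  have "\<bar>a + 2*g\<bar> powr q \<le> (2 * max k (2*g)) powr q"
    using assms by (intro powr_mono2) auto
  also have "\<dots> = 2 powr q * (max k (2*g)) powr q" by (rule powr_mult; use assms in auto)
  also have "(max k (2*g)) powr q \<le> k powr q + (2*g) powr q"
    by (cases "k \<le> 2*g") (auto simp: max_def)
  also have "(2*g) powr q = 2 powr q * g powr q" by (rule powr_mult; use assms in auto)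
  also have "(4::real) powr q = 2 powr q * 2 powr q"
    using powr_mult[of 2 2 q] by simp
  ultimately show ?thesis by (simp add: algebra_simps mult_left_mono)
qed

locale kern =
  fixes Kx :: "'a::euclidean_space \<Rightarrow> real" and s p lam Lam M \<gamma> :: real
  assumes Kmeas[measurable]: "Kx \<in> borel_measurable borel"
    and Knn: "\<And>y. 0 \<le> Kx y"
    and Ksym: "\<And>y. Kx (- y) = Kx y"
    and Klow: "\<And>y. y \<noteq> 0 \<Longrightarrow> norm y < 2 \<Longrightarrow> lam * norm y powr (- real DIM('a) - s * p) \<le> Kx y"
    and Kup: "\<And>y. y \<noteq> 0 \<Longrightarrow> norm y < 2 \<Longrightarrow> Kx y \<le> Lam * norm y powr (- real DIM('a) - s * p)"
    and Kfar: "\<And>y. 1/4 \<le> norm y \<Longrightarrow> Kx y \<le> M * norm y powr (- real DIM('a) - \<gamma>)"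
    and prm: "0 < s" "s < 1" "1 < p" "0 < lam" "lam \<le> Lam" "0 < M" "0 < \<gamma>"
begin

lemma Kleb: "Kx \<in> borel_measurable lebesgue" by (rule borel_to_leb) (rule Kmeas)

lemma T_part:
  assumes eta: "0 < \<eta>" "\<eta> * (p - 1) \<le> \<gamma> / 2"
  shows "set_integrable lebesgue OutS (\<lambda>y. (norm (8 *\<^sub>R y) powr \<eta> - 1) powr (p - 1) * Kx y)"
    "(LINT y : OutS | lebesgue. (norm (8 *\<^sub>R y) powr \<eta> - 1) powr (p - 1) * Kx y)
       \<le> M * integral\<^sup>L lebesgue (Efun p \<gamma> \<eta> :: 'a \<Rightarrow> real)"
proof -
  have EI: "integrable lebesgue (Efun p \<gamma> \<eta> :: 'a \<Rightarrow> real)"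
    using Efun_integrable[OF prm(3) prm(7) eta] .
  have pw: "\<bar>indicator OutS y * ((norm (8 *\<^sub>R y) powr \<eta> - 1) powr (p - 1) * Kx y)\<bar> \<le> M * Efun p \<gamma> \<eta> y"
    for y :: 'a
  proof (cases "y \<in> OutS")
    case False thus ?thesis by (simp add: Efun_def)
  next
    case True
    have "0 \<le> (norm (8 *\<^sub>R y) powr \<eta> - 1) powr (p - 1) * Kx y" using Knn by simp
    moreover have "(norm (8 *\<^sub>R y) powr \<eta> - 1) powr (p - 1) * Kx y
        \<le> (norm (8 *\<^sub>R y) powr \<eta> - 1) powr (p - 1) * (M * norm y powr (- real DIM('a) - \<gamma>))"
      using Kfar[of y] True by (intro mult_left_mono) (auto simp: OutS_mem)
    ultimately show ?thesis using True by (simp add: Efun_def mult_ac)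
  qed
  have meas: "(\<lambda>y::'a. indicator OutS y * ((norm (8 *\<^sub>R y) powr \<eta> - 1) powr (p - 1) * Kx y)) \<in> borel_measurable lebesgue"
    by (intro borel_to_leb) measurable
  have int: "integrable lebesgue (\<lambda>y::'a. indicator OutS y * ((norm (8 *\<^sub>R y) powr \<eta> - 1) powr (p - 1) * Kx y))"
  proof (rule Bochner_Integration.integrable_bound)
    show "integrable lebesgue (\<lambda>y::'a. M * Efun p \<gamma> \<eta> y)" using EI by simp
    show "AE y in lebesgue. norm (indicator OutS y * ((norm (8 *\<^sub>R y) powr \<eta> - 1) powr (p - 1) * Kx y))
        \<le> norm (M * Efun p \<gamma> \<eta> (y::'a))"
    proof (intro always_eventually allI)
      fix y :: 'a
      have "0 \<le> Efun p \<gamma> \<eta> y" using Efun_bound(1)[OF prm(3) prm(7) eta, of y] .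
      thus "norm (indicator OutS y * ((norm (8 *\<^sub>R y) powr \<eta> - 1) powr (p - 1) * Kx y))
        \<le> norm (M * Efun p \<gamma> \<eta> y)" using pw[of y] prm(6) by (simp add: abs_mult)
    qed
  qed (rule meas)
  thus "set_integrable lebesgue OutS (\<lambda>y. (norm (8 *\<^sub>R y) powr \<eta> - 1) powr (p - 1) * Kx y)"
    by (simp add: set_integrable_def)
  have "(LINT y : OutS | lebesgue. (norm (8 *\<^sub>R y) powr \<eta> - 1) powr (p - 1) * Kx y)
      = integral\<^sup>L lebesgue (\<lambda>y::'a. indicator OutS y * ((norm (8 *\<^sub>R y) powr \<eta> - 1) powr (p - 1) * Kx y))"
    by (simp add: set_lebesgue_integral_def)
  also have "\<dots> \<le> integral\<^sup>L lebesgue (\<lambda>y::'a. M * Efun p \<gamma> \<eta> y)"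
    using int EI pw by (intro integral_mono) (auto simp: abs_le_iff)
  also have "\<dots> = M * integral\<^sup>L lebesgue (Efun p \<gamma> \<eta> :: 'a \<Rightarrow> real)" by simp
  finally show "(LINT y : OutS | lebesgue. (norm (8 *\<^sub>R y) powr \<eta> - 1) powr (p - 1) * Kx y)
       \<le> M * integral\<^sup>L lebesgue (Efun p \<gamma> \<eta> :: 'a \<Rightarrow> real)" .
qed

lemma S2_part:
  fixes x :: 'a
  assumes eta: "0 < \<eta>" "\<eta> * (p - 1) \<le> \<gamma> / 2" and k: "0 < k" "k \<le> 1/2"
  defines "S2 \<equiv> (\<lambda>y. \<bar>k * beta x + 2 * (norm (8 *\<^sub>R y) powr \<eta> - 1)\<bar> powr (p - 1) * Kx y)"
  shows "set_integrable lebesgue OutS S2"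
    "(LINT y : OutS | lebesgue. S2 y) \<le> 2 powr (p-1) * k powr (p-1) * M *
        integral\<^sup>L lebesgue (\<lambda>y::'a. indicator OutS y * norm y powr (- real DIM('a) - \<gamma>))
      + 4 powr (p-1) * M * integral\<^sup>L lebesgue (Efun p \<gamma> \<eta> :: 'a \<Rightarrow> real)"
proof -
  define D where "D y = 2 powr (p-1) * k powr (p-1) * M * (indicator OutS y * norm y powr (- real DIM('a) - \<gamma>))
      + 4 powr (p-1) * M * Efun p \<gamma> \<eta> y" for y :: 'a
  have EI: "integrable lebesgue (Efun p \<gamma> \<eta> :: 'a \<Rightarrow> real)"
    using Efun_integrable[OF prm(3) prm(7) eta] .
  have OI: "integrable lebesgue (\<lambda>y::'a. indicator OutS y * norm y powr (- real DIM('a) - \<gamma>))"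
    using int_out[of "real DIM('a) + \<gamma>", where 'a='a] prm by simp
  have DI: "integrable lebesgue D" unfolding D_def using EI OI by simp
  have pw: "\<bar>indicator OutS y * S2 y\<bar> \<le> D y" for y :: 'a
  proof (cases "y \<in> OutS")
    case False
    have "0 \<le> Efun p \<gamma> \<eta> y" using Efun_bound(1)[OF prm(3) prm(7) eta, of y] .
    thus ?thesis using False prm by (simp add: D_def)
  next
    case True
    note gb = g_bounds[OF True eta(1)]
    have kb: "0 \<le> k * beta x" "k * beta x \<le> k" using k beta_nonneg[of x] beta_le1[of x]
      by (auto simp: mult_left_le)
    have A: "\<bar>k * beta x + 2 * (norm (8 *\<^sub>R y) powr \<eta> - 1)\<bar> powr (p - 1)
       \<le> 2 powr (p-1) * k powr (p-1) + 4 powr (p-1) * (norm (8 *\<^sub>R y) powr \<eta> - 1) powr (p - 1)"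
      using kb gb prm by (intro sum_powr_bound) auto
    have B: "0 \<le> Kx y" "Kx y \<le> M * norm y powr (- real DIM('a) - \<gamma>)"
      using Knn Kfar[of y] True by (auto simp: OutS_mem)
    have "\<bar>indicator OutS y * S2 y\<bar> = S2 y" using True Knn by (simp add: S2_def)
    also have "\<dots> \<le> (2 powr (p-1) * k powr (p-1) + 4 powr (p-1) * (norm (8 *\<^sub>R y) powr \<eta> - 1) powr (p - 1))
        * (M * norm y powr (- real DIM('a) - \<gamma>))"
      unfolding S2_def using A B by (intro mult_mono) auto
    also have "\<dots> = D y" using True by (simp add: D_def Efun_def algebra_simps)
    finally show ?thesis .
  qed
  have meas: "(\<lambda>y::'a. indicator OutS y * S2 y) \<in> borel_measurable lebesgue"
    unfolding S2_def by (intro borel_to_leb) measurable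
  have int: "integrable lebesgue (\<lambda>y::'a. indicator OutS y * S2 y)"
    by (rule Bochner_Integration.integrable_bound[OF DI meas])
       (intro always_eventually allI, use pw in \<open>auto intro: order.trans[OF _ abs_ge_self]\<close>)
  thus "set_integrable lebesgue OutS S2" by (simp add: set_integrable_def)
  have "(LINT y : OutS | lebesgue. S2 y) = integral\<^sup>L lebesgue (\<lambda>y::'a. indicator OutS y * S2 y)"
    by (simp add: set_lebesgue_integral_def)
  also have "\<dots> \<le> integral\<^sup>L lebesgue D"
    using int DI pw by (intro integral_mono) (auto simp: abs_le_iff)
  also have "\<dots> = 2 powr (p-1) * k powr (p-1) * M *
        integral\<^sup>L lebesgue (\<lambda>y::'a. indicator OutS y * norm y powr (- real DIM('a) - \<gamma>))
      + 4 powr (p-1) * M * integral\<^sup>L lebesgue (Efun p \<gamma> \<eta> :: 'a \<Rightarrow> real)"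
    unfolding D_def using EI OI by simp
  finally show "(LINT y : OutS | lebesgue. S2 y) \<le> 2 powr (p-1) * k powr (p-1) * M *
        integral\<^sup>L lebesgue (\<lambda>y::'a. indicator OutS y * norm y powr (- real DIM('a) - \<gamma>))
      + 4 powr (p-1) * M * integral\<^sup>L lebesgue (Efun p \<gamma> \<eta> :: 'a \<Rightarrow> real)" .
qed

lemma beta_diff_le1: "\<bar>beta x - beta y\<bar> \<le> 1"
  using beta_nonneg[of x] beta_le1[of x] beta_nonneg[of y] beta_le1[of y] by linarith

lemma G_part:
  fixes x :: 'a
  assumes x: "norm x < 1" and p2: "p < 2" and pc: "1 < p * (1 - s)"
  defines "b1 \<equiv> real DIM('a) + s*p - (p-1)"
  shows "integrable lebesgue (\<lambda>y. \<bar>beta x - beta (x + y)\<bar> powr (p - 1) * Kx y)"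
    "integral\<^sup>L lebesgue (\<lambda>y. \<bar>beta x - beta (x + y)\<bar> powr (p - 1) * Kx y)
      \<le> 8 powr (p-1) * Lam * integral\<^sup>L lebesgue (\<lambda>y::'a. indicator (ball 0 (1/4)) y * norm y powr (-b1))
        + M * integral\<^sup>L lebesgue (\<lambda>y::'a. indicator OutS y * norm y powr (- real DIM('a) - \<gamma>))"
proof -
  define G where "G y = \<bar>beta x - beta (x + y)\<bar> powr (p - 1) * Kx y" for y
  define D where "D y = 8 powr (p-1) * Lam * (indicator (ball 0 (1/4)) y * norm y powr (-b1))
        + M * (indicator OutS y * norm y powr (- real DIM('a) - \<gamma>))" for y :: 'a
  have b1: "0 \<le> b1" "b1 < real DIM('a)"
  proof -
    have "real DIM('a) \<ge> 1" by (simp add: DIM_positive Suc_le_eq)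
    moreover have "p * (1 - s) < 2" using prm p2 by (intro le_less_trans[OF mult_left_le[of "1-s" p]]) auto
    moreover have "p * (1 - s) = p - s * p" by (simp add: algebra_simps)
    ultimately show "0 \<le> b1" unfolding b1_def by linarith
    show "b1 < real DIM('a)" using pc unfolding b1_def by (simp add: algebra_simps)
  qed
  have II: "integrable lebesgue (\<lambda>y::'a. indicator (ball 0 (1/4)) y * norm y powr (-b1))"
    using int_in[OF b1] .
  have OI: "integrable lebesgue (\<lambda>y::'a. indicator OutS y * norm y powr (- real DIM('a) - \<gamma>))"
    using int_out[of "real DIM('a) + \<gamma>", where 'a='a] prm by simp
  have DI: "integrable lebesgue D" unfolding D_def using II OI by simp
  have Lam0: "0 < Lam" using prm by linarith
  have D0: "0 \<le> D y" for y unfolding D_def using Lam0 prm by simp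
  have pw: "\<bar>G y\<bar> \<le> D y" for y
  proof -
    have G0: "0 \<le> G y" using Knn by (simp add: G_def)
    consider "y = 0" | "y \<noteq> 0" "norm y < 1/4" | "1/4 \<le> norm y" by linarith
    thus ?thesis
    proof cases
      case 1 thus ?thesis using D0[of y] prm by (simp add: G_def)
    next
      case 2
      have l: "\<bar>beta x - beta (x + y)\<bar> \<le> 8 * norm y" using x 2 by (intro beta_lip) auto
      have "\<bar>beta x - beta (x + y)\<bar> powr (p - 1) \<le> (8 * norm y) powr (p - 1)"
        using l prm by (intro powr_mono2) auto
      also have "\<dots> = 8 powr (p-1) * norm y powr (p-1)" by (rule powr_mult; auto)
      finally have a: "\<bar>beta x - beta (x + y)\<bar> powr (p - 1) \<le> 8 powr (p-1) * norm y powr (p-1)" .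
      have b: "Kx y \<le> Lam * norm y powr (- real DIM('a) - s * p)" using Kup[of y] 2 by simp
      have "G y \<le> (8 powr (p-1) * norm y powr (p-1)) * (Lam * norm y powr (- real DIM('a) - s * p))"
        unfolding G_def using a b Knn[of y] by (intro mult_mono) auto
      also have "\<dots> = 8 powr (p-1) * Lam * (norm y powr (p-1) * norm y powr (- real DIM('a) - s * p))"
        by (simp add: mult_ac)
      also have "norm y powr (p-1) * norm y powr (- real DIM('a) - s * p) = norm y powr (-b1)"
        unfolding b1_def by (simp add: powr_add[symmetric] algebra_simps)
      also have "8 powr (p-1) * Lam * norm y powr (-b1) = D y"
        using 2 by (simp add: D_def OutS_mem)
      finally show ?thesis using G0 by simp
    next
      case 3
      have "\<bar>beta x - beta (x + y)\<bar> powr (p - 1) \<le> 1 powr (p - 1)"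
        using beta_diff_le1 prm by (intro powr_mono2) auto
      hence a: "\<bar>beta x - beta (x + y)\<bar> powr (p - 1) \<le> 1" by simp
      have b: "Kx y \<le> M * norm y powr (- real DIM('a) - \<gamma>)" using Kfar 3 by simp
      have "G y \<le> 1 * (M * norm y powr (- real DIM('a) - \<gamma>))"
        unfolding G_def using a b Knn[of y] by (intro mult_mono) auto
      also have "\<dots> = D y" using 3 by (simp add: D_def OutS_mem)
      finally show ?thesis using G0 by simp
    qed
  qed
  have meas: "G \<in> borel_measurable lebesgue"
    unfolding G_def[abs_def] by (intro borel_to_leb) measurable
  have int: "integrable lebesgue G"
    by (rule Bochner_Integration.integrable_bound[OF DI meas])
       (intro always_eventually allI, use pw in \<open>auto intro: order.trans[OF _ abs_ge_self]\<close>)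
  thus "integrable lebesgue (\<lambda>y. \<bar>beta x - beta (x + y)\<bar> powr (p - 1) * Kx y)"
    by (simp add: G_def[abs_def])
  have "integral\<^sup>L lebesgue G \<le> integral\<^sup>L lebesgue D"
    using int DI pw by (intro integral_mono) (auto simp: abs_le_iff)
  also have "\<dots> = 8 powr (p-1) * Lam * integral\<^sup>L lebesgue (\<lambda>y::'a. indicator (ball 0 (1/4)) y * norm y powr (-b1))
        + M * integral\<^sup>L lebesgue (\<lambda>y::'a. indicator OutS y * norm y powr (- real DIM('a) - \<gamma>))"
    unfolding D_def using II OI by simp
  finally show "integral\<^sup>L lebesgue (\<lambda>y. \<bar>beta x - beta (x + y)\<bar> powr (p - 1) * Kx y)
      \<le> 8 powr (p-1) * Lam * integral\<^sup>L lebesgue (\<lambda>y::'a. indicator (ball 0 (1/4)) y * norm y powr (-b1))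
        + M * integral\<^sup>L lebesgue (\<lambda>y::'a. indicator OutS y * norm y powr (- real DIM('a) - \<gamma>))"
    by (simp add: G_def[abs_def])
qed

end


lemma H_point:
  fixes x y :: "'a::euclidean_space" and p K Lam e :: real
  assumes x: "norm x < 3/4" and y: "y \<noteq> 0" "norm y < 1/4" and p: "2 < p"
    and K: "0 \<le> K" "K \<le> Lam * norm y powr e"
  shows "\<bar>(\<bar>beta x - beta (x + y)\<bar> powr (p - 2) * (beta x - beta (x + y))
          + \<bar>beta x - beta (x + - y)\<bar> powr (p - 2) * (beta x - beta (x + - y))) * K\<bar>
       \<le> 14 * (p - 1) * 8 powr (p - 2) * Lam * norm y powr (p + e)"
proof -
  define u where "u = beta x - beta (x + y)"
  define w where "w = beta x - beta (x + - y)"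
  have ny: "0 < norm y" using y by simp
  have u: "\<bar>u\<bar> \<le> 8 * norm y" unfolding u_def using x y by (intro beta_lip) auto
  have w: "\<bar>-w\<bar> \<le> 8 * norm y" unfolding w_def using x y beta_lip[of x "-y"] by auto
  have eq: "\<bar>u\<bar> powr (p - 2) * u + \<bar>w\<bar> powr (p - 2) * w = \<bar>u\<bar> powr (p - 2) * u - \<bar>-w\<bar> powr (p - 2) * (-w)"
    by simp
  have uw: "\<bar>u - (-w)\<bar> \<le> 14 * (norm y)\<^sup>2"
    using beta_second[OF x y(2)] unfolding u_def w_def by (simp add: algebra_simps)
  have "\<bar>\<bar>u\<bar> powr (p - 2) * u - \<bar>-w\<bar> powr (p - 2) * (-w)\<bar> \<le> (p-1) * (8 * norm y) powr (p-2) * \<bar>u - (-w)\<bar>"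
    by (rule phi_lip[OF p u w])
  also have "\<dots> \<le> (p-1) * (8 * norm y) powr (p-2) * (14 * (norm y)\<^sup>2)"
    using uw p by (intro mult_left_mono) auto
  finally have A: "\<bar>\<bar>u\<bar> powr (p - 2) * u + \<bar>w\<bar> powr (p - 2) * w\<bar> \<le> (p-1) * (8 * norm y) powr (p-2) * (14 * (norm y)\<^sup>2)"
    using eq by (simp only:)
  have "\<bar>(\<bar>u\<bar> powr (p - 2) * u + \<bar>w\<bar> powr (p - 2) * w) * K\<bar>
      = \<bar>\<bar>u\<bar> powr (p - 2) * u + \<bar>w\<bar> powr (p - 2) * w\<bar> * K" using K by (simp add: abs_mult)
  also have "\<dots> \<le> ((p-1) * (8 * norm y) powr (p-2) * (14 * (norm y)\<^sup>2)) * (Lam * norm y powr e)"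
    using A K p by (intro mult_mono) auto
  also have "\<dots> = 14 * (p - 1) * 8 powr (p - 2) * Lam * (norm y powr (p-2) * norm y powr 2 * norm y powr e)"
  proof -
    have "(8 * norm y) powr (p-2) = 8 powr (p-2) * norm y powr (p-2)" by (rule powr_mult; auto)
    moreover have "(norm y)\<^sup>2 = norm y powr 2" using ny by (simp add: powr_realpow)
    ultimately show ?thesis by (simp only: mult_ac)
  qed
  also have "norm y powr (p-2) * norm y powr 2 * norm y powr e = norm y powr (p + e)"
  proof -
    have ex: "p + e = (p - 2) + 2 + e" by simp
    show ?thesis by (simp only: ex powr_add)
  qed
  finally show ?thesis unfolding u_def w_def .
qed



context kern begin

lemma PV_part:
  fixes x :: 'a
  assumes x: "norm x < 3/4" and p2: "2 < p"
  defines "F \<equiv> (\<lambda>y. \<bar>beta x - beta (x + y)\<bar> powr (p - 2) * (beta x - beta (x + y)) * Kx y)"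
    and "b2 \<equiv> max 0 (real DIM('a) + s * p - p)"
  shows "\<exists>PV. (\<forall>r>0. set_integrable lebesgue ({y. x + y \<in> ball 0 1} - ball 0 r) F)
     \<and> ((\<lambda>r. LINT y : ({y. x + y \<in> ball 0 1} - ball 0 r) | lebesgue. F y) \<longlongrightarrow> PV) (at_right 0)
     \<and> PV \<le> 14 * (p - 1) * 8 powr (p - 2) * Lam * integral\<^sup>L lebesgue (\<lambda>y::'a. indicator (ball 0 (1/4)) y * norm y powr (-b2))
          + M * integral\<^sup>L lebesgue (\<lambda>y::'a. indicator OutS y * norm y powr (- real DIM('a) - \<gamma>))"
proof -
  have set_eq: "{y. x + y \<in> ball 0 1} = ball (-x) 1"
    by (auto simp: dist_norm norm_minus_commute add.commute)
  define R where "R r = ball (-x) 1 - ball (0::'a) r" for r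
  define A where "A r = ball (0::'a) (1/4) - ball 0 r" for r
  define H where "H y = (F y + F (- y)) / 2" for y
  define CH where "CH = 14 * (p - 1) * 8 powr (p - 2) * Lam"
  define e where "e = - real DIM('a) - s * p"
  have Lam0: "0 < Lam" using prm by linarith
  have CH0: "0 \<le> CH" unfolding CH_def using p2 Lam0 by simp
  have e0: "e \<le> 0"
  proof -
    have "0 \<le> s * p" using prm by simp
    thus ?thesis unfolding e_def by linarith
  qed
  have b2: "0 \<le> b2" "b2 < real DIM('a)" unfolding b2_def using prm
    by (auto simp: DIM_positive mult_less_cancel_right2)
  have Fmeas: "F \<in> borel_measurable lebesgue" unfolding F_def by (intro borel_to_leb) measurable
  have F0: "F 0 = 0" by (simp add: F_def)
  have H0: "H 0 = 0" by (simp add: H_def F0)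
  have Fle: "\<bar>F y\<bar> \<le> Kx y" for y
  proof -
    have a: "\<bar>beta x - beta (x + y)\<bar> powr (p - 2) \<le> 1"
    proof -
      have "\<bar>beta x - beta (x + y)\<bar> powr (p - 2) \<le> 1 powr (p - 2)"
        using beta_diff_le1 p2 by (intro powr_mono2) auto
      thus ?thesis by simp
    qed
    have "\<bar>F y\<bar> = \<bar>beta x - beta (x + y)\<bar> powr (p - 2) * \<bar>beta x - beta (x + y)\<bar> * Kx y"
      using Knn[of y] by (simp add: F_def abs_mult)
    also have "\<dots> \<le> 1 * 1 * Kx y" using a beta_diff_le1 Knn[of y]
      by (intro mult_mono) auto
    finally show ?thesis by simp
  qed
  have Rnorm: "y \<in> R r \<Longrightarrow> r \<le> norm y \<and> norm y < 2" for y r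
  proof -
    assume "y \<in> R r"
    have "- x - y = - (y + x)" by (simp add: algebra_simps)
    hence nn: "norm (- x - y) = norm (y + x)" by (simp only: norm_minus_cancel)
    from \<open>y \<in> R r\<close> have "norm (y + x) < 1" "r \<le> norm y" by (auto simp: R_def dist_norm nn)
    moreover have "norm y \<le> norm (y + x) + norm x" by (metis add_diff_cancel_right' norm_triangle_ineq4)
    ultimately show ?thesis using x by linarith
  qed
  have Rsets: "R r \<in> sets lebesgue" for r unfolding R_def by (intro sets.Diff ball_leb)
  have Asets: "A r \<in> sets lebesgue" for r unfolding A_def by (intro sets.Diff ball_leb)
  have intR: "integrable lebesgue (\<lambda>y. indicator (R r) y * F y)" if r: "0 < r" for r
  proof (rule Bochner_Integration.integrable_bound)
    have "emeasure lebesgue (ball (0::'a) 2) = ennreal (2 ^ DIM('a) * measure lebesgue (ball (0::'a) 1))"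
      by (rule emeasure_ball_lebesgue) simp
    hence "emeasure lebesgue (ball (0::'a) 2) < \<infinity>" by simp
    hence "integrable lebesgue (indicator (ball (0::'a) 2) :: 'a \<Rightarrow> real)"
      by (intro integrable_real_indicator ball_leb)
    thus "integrable lebesgue (\<lambda>y::'a. Lam * r powr e * indicator (ball 0 2) y)" by simp
    show "(\<lambda>y. indicator (R r) y * F y) \<in> borel_measurable lebesgue"
      using Fmeas Rsets by measurable
    show "AE y in lebesgue. norm (indicator (R r) y * F y) \<le> norm (Lam * r powr e * indicator (ball (0::'a) 2) y)"
    proof (intro always_eventually allI)
      fix y :: 'a
      show "norm (indicator (R r) y * F y) \<le> norm (Lam * r powr e * indicator (ball (0::'a) 2) y)"
      proof (cases "y \<in> R r")
        case False thus ?thesis by simp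
      next
        case True
        note yn = Rnorm[OF True]
        have y0: "y \<noteq> 0" using yn r by auto
        have "\<bar>F y\<bar> \<le> Kx y" by (rule Fle)
        also have "\<dots> \<le> Lam * norm y powr e" using Kup[OF y0] yn by (simp add: e_def)
        also have "\<dots> \<le> Lam * r powr e" using Lam0 yn r e0 by (intro mult_left_mono powr_mono2') auto
        finally show ?thesis using True yn Lam0 by simp
      qed
    qed
  qed
  have AR: "A r \<subseteq> R r" for r
  proof
    fix y assume "y \<in> A r"
    hence y: "norm y < 1/4" "r \<le> norm y" by (auto simp: A_def)
    have "norm (- x - y) \<le> norm x + norm y" by (metis norm_minus_cancel norm_triangle_ineq4 minus_diff_eq diff_minus_eq_add norm_minus_commute)
    thus "y \<in> R r" using x y by (auto simp: R_def dist_norm)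
  qed
  have intA: "integrable lebesgue (\<lambda>y. indicator (A r) y * F y)" if r: "0 < r" for r
  proof -
    have "integrable lebesgue (\<lambda>y. indicator (A r) y *\<^sub>R (indicator (R r) y * F y))"
      by (intro integrable_mult_indicator Asets intR r)
    moreover have "A r \<subseteq> R r" by (rule AR)
    hence "(\<lambda>y. indicator (A r) y *\<^sub>R (indicator (R r) y * F y)) = (\<lambda>y. indicator (A r) y * F y)"
      by (auto simp: indicator_def fun_eq_iff)
    ultimately show ?thesis by simp
  qed
  have Hbound: "\<bar>indicator (ball 0 (1/4)) y * H y\<bar> \<le> CH * (indicator (ball 0 (1/4)) y * norm y powr (-b2))" for y :: 'a
  proof -
    consider "y = 0" | "norm y \<ge> 1/4" | "y \<noteq> 0" "norm y < 1/4" by linarith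
    thus ?thesis
    proof cases
      case 1 thus ?thesis using H0 by simp
    next
      case 2 thus ?thesis by simp
    next
      case 3
      have HH: "H y = ((\<bar>beta x - beta (x + y)\<bar> powr (p - 2) * (beta x - beta (x + y))
          + \<bar>beta x - beta (x + - y)\<bar> powr (p - 2) * (beta x - beta (x + - y))) * Kx y) / 2"
        unfolding H_def F_def by (simp add: Ksym algebra_simps)
      have "\<bar>(\<bar>beta x - beta (x + y)\<bar> powr (p - 2) * (beta x - beta (x + y))
          + \<bar>beta x - beta (x + - y)\<bar> powr (p - 2) * (beta x - beta (x + - y))) * Kx y\<bar>
         \<le> 14 * (p - 1) * 8 powr (p - 2) * Lam * norm y powr (p + e)"
        using Kup[of y] 3 by (intro H_point[OF x 3(1) 3(2) p2 Knn]) (auto simp: e_def)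
      hence "\<bar>H y\<bar> \<le> CH * norm y powr (p + e)" unfolding HH CH_def by simp
      also have "\<dots> \<le> CH * norm y powr (-b2)"
        using 3 CH0 by (intro mult_left_mono powr_mono') (auto simp: b2_def e_def)
      finally show ?thesis using 3 by simp
    qed
  qed
  have HBI: "integrable lebesgue (\<lambda>y::'a. CH * (indicator (ball 0 (1/4)) y * norm y powr (-b2)))"
    using int_in[OF b2] by simp
  have Hmeas: "H \<in> borel_measurable lebesgue" unfolding H_def F_def by (intro borel_to_leb) measurable
  have HI: "integrable lebesgue (\<lambda>y. indicator (ball (0::'a) (1/4)) y * H y)"
  proof (rule Bochner_Integration.integrable_bound[OF HBI])
    show "(\<lambda>y. indicator (ball (0::'a) (1/4)) y * H y) \<in> borel_measurable lebesgue"
      using Hmeas ball_leb by measurable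
    show "AE y in lebesgue. norm (indicator (ball (0::'a) (1/4)) y * H y) \<le> norm (CH * (indicator (ball 0 (1/4)) y * norm y powr (-b2)))"
      by (intro always_eventually allI) (use Hbound in \<open>auto intro: order.trans[OF _ abs_ge_self]\<close>)
  qed
  have Asym: "indicator (A r) (- y) = (indicator (A r) y :: real)" for r y
    by (simp add: A_def indicator_def)
  have AH: "integral\<^sup>L lebesgue (\<lambda>y. indicator (A r) y * F y) = integral\<^sup>L lebesgue (\<lambda>y. indicator (A r) y * H y)"
    if r: "0 < r" for r
  proof -
    have I1: "integrable lebesgue (\<lambda>y. indicator (A r) y * F y)" by (rule intA[OF r])
    have I2: "integrable lebesgue (\<lambda>y. indicator (A r) y * F (- y))"
      using integrable_reflect_leb[OF I1] by (simp add: Asym)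
    have "integral\<^sup>L lebesgue (\<lambda>y. indicator (A r) y * F (- y)) = integral\<^sup>L lebesgue (\<lambda>y. indicator (A r) y * F y)"
      using integral_reflect_leb[OF borel_measurable_integrable[OF I1]] by (simp add: Asym)
    moreover have "(\<lambda>y. indicator (A r) y * H y) = (\<lambda>y. (indicator (A r) y * F y + indicator (A r) y * F (- y)) / 2)"
      by (simp add: H_def fun_eq_iff algebra_simps)
    ultimately show ?thesis using I1 I2 by (simp add: integral_divide_zero)
  qed
  have split: "integral\<^sup>L lebesgue (\<lambda>y. indicator (R r) y * F y)
      = integral\<^sup>L lebesgue (\<lambda>y. indicator (A r) y * H y) + integral\<^sup>L lebesgue (\<lambda>y. indicator (R (1/4)) y * F y)"
    if r: "0 < r" "r < 1/4" for r
  proof -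
    have "indicator (R r) y * F y = indicator (A r) y * F y + indicator (R (1/4)) y * F y" for y
    proof -
      have "y \<in> R r \<longleftrightarrow> y \<in> A r \<or> y \<in> R (1/4)"
        using AR[of r] r by (auto simp: R_def A_def)
      moreover have "\<not> (y \<in> A r \<and> y \<in> R (1/4))" by (auto simp: R_def A_def)
      ultimately show ?thesis by (auto simp: indicator_def)
    qed
    hence "integral\<^sup>L lebesgue (\<lambda>y. indicator (R r) y * F y)
       = integral\<^sup>L lebesgue (\<lambda>y. indicator (A r) y * F y + indicator (R (1/4)) y * F y)" by simp
    also have "\<dots> = integral\<^sup>L lebesgue (\<lambda>y. indicator (A r) y * F y) + integral\<^sup>L lebesgue (\<lambda>y. indicator (R (1/4)) y * F y)"
      using intA[OF r(1)] intR[of "1/4"] by (intro Bochner_Integration.integral_add) auto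
    finally show ?thesis using AH[OF r(1)] by simp
  qed
  define PV where "PV = integral\<^sup>L lebesgue (\<lambda>y. indicator (ball (0::'a) (1/4)) y * H y)
      + integral\<^sup>L lebesgue (\<lambda>y. indicator (R (1/4)) y * F y)"
  have setR: "{y. x + y \<in> ball 0 1} - ball 0 r = R r" for r unfolding R_def set_eq[symmetric] ..
  have LINT_eq: "(LINT y : R r | lebesgue. F y) = integral\<^sup>L lebesgue (\<lambda>y. indicator (R r) y * F y)" for r
    by (simp add: set_lebesgue_integral_def)
  have w0: "0 \<le> CH * (indicator (ball 0 (1/4)) y * norm y powr (-b2))" for y :: 'a
    using Hbound[of y] by linarith
  have lim: "((\<lambda>r. LINT y : R r | lebesgue. F y) \<longlongrightarrow> PV) (at_right 0)"
  proof (rule tendsto_at_right_sequentially[of 0 "1/4"])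
    fix S :: "nat \<Rightarrow> real"
    assume S: "\<And>n. 0 < S n" "\<And>n. S n < 1/4" "S \<longlonglongrightarrow> 0"
    have "(\<lambda>n. integral\<^sup>L lebesgue (\<lambda>y. indicator (A (S n)) y * H y))
        \<longlonglongrightarrow> integral\<^sup>L lebesgue (\<lambda>y. indicator (ball (0::'a) (1/4)) y * H y)"
    proof (rule integral_dominated_convergence[OF _ _ HBI])
      show "(\<lambda>y. indicator (ball (0::'a) (1/4)) y * H y) \<in> borel_measurable lebesgue"
        using Hmeas ball_leb by measurable
      show "(\<lambda>y. indicator (A (S n)) y * H y) \<in> borel_measurable lebesgue" for n
        using Hmeas Asets by measurable
      show "AE y in lebesgue. norm (indicator (A (S n)) y * H y) \<le> CH * (indicator (ball 0 (1/4)) y * norm y powr (-b2))" for n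
      proof (intro always_eventually allI)
        fix y :: 'a
        show "norm (indicator (A (S n)) y * H y) \<le> CH * (indicator (ball 0 (1/4)) y * norm y powr (-b2))"
        proof (cases "y \<in> A (S n)")
          case True
          hence "y \<in> ball 0 (1/4)" by (simp add: A_def)
          thus ?thesis using True Hbound[of y] by simp
        next
          case False thus ?thesis using w0[of y] by simp
        qed
      qed
      show "AE y in lebesgue. (\<lambda>n. indicator (A (S n)) y * H y) \<longlonglongrightarrow> indicator (ball (0::'a) (1/4)) y * H y"
      proof (intro always_eventually allI)
        fix y :: 'a
        show "(\<lambda>n. indicator (A (S n)) y * H y) \<longlonglongrightarrow> indicator (ball (0::'a) (1/4)) y * H y"
        proof (cases "y = 0")
          case True thus ?thesis using H0 by simp
        next
          case False
          hence "0 < norm y" by simp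
          from order_tendstoD(2)[OF S(3) this]
          have "eventually (\<lambda>n. S n < norm y) sequentially" .
          hence "eventually (\<lambda>n. indicator (A (S n)) y * H y = indicator (ball (0::'a) (1/4)) y * H y) sequentially"
            by eventually_elim (auto simp: A_def indicator_def)
          thus ?thesis by (rule tendsto_eventually)
        qed
      qed
    qed
    hence "(\<lambda>n. integral\<^sup>L lebesgue (\<lambda>y. indicator (A (S n)) y * H y) + integral\<^sup>L lebesgue (\<lambda>y. indicator (R (1/4)) y * F y))
        \<longlonglongrightarrow> PV" unfolding PV_def by (intro tendsto_add tendsto_const)
    moreover have "(LINT y : R (S n) | lebesgue. F y) = integral\<^sup>L lebesgue (\<lambda>y. indicator (A (S n)) y * H y) + integral\<^sup>L lebesgue (\<lambda>y. indicator (R (1/4)) y * F y)" for n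
      using split[OF S(1) S(2)] LINT_eq by simp
    ultimately show "(\<lambda>n. LINT y : R (S n) | lebesgue. F y) \<longlonglongrightarrow> PV" by simp
  qed simp
  have bnd1: "integral\<^sup>L lebesgue (\<lambda>y. indicator (ball (0::'a) (1/4)) y * H y)
      \<le> integral\<^sup>L lebesgue (\<lambda>y::'a. CH * (indicator (ball 0 (1/4)) y * norm y powr (-b2)))"
    using HI HBI Hbound by (intro integral_mono) (auto simp: abs_le_iff)
  have OI: "integrable lebesgue (\<lambda>y::'a. M * (indicator OutS y * norm y powr (- real DIM('a) - \<gamma>)))"
    using int_out[of "real DIM('a) + \<gamma>", where 'a='a] prm by simp
  have bnd2: "integral\<^sup>L lebesgue (\<lambda>y. indicator (R (1/4)) y * F y)
      \<le> integral\<^sup>L lebesgue (\<lambda>y::'a. M * (indicator OutS y * norm y powr (- real DIM('a) - \<gamma>)))"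
  proof (rule integral_mono[OF intR OI])
    show "0 < (1/4::real)" by simp
    fix y :: 'a
    show "indicator (R (1/4)) y * F y \<le> M * (indicator OutS y * norm y powr (- real DIM('a) - \<gamma>))"
    proof (cases "y \<in> R (1/4)")
      case True
      hence yO: "y \<in> OutS" using Rnorm[OF True] by (simp add: OutS_mem)
      have "F y \<le> Kx y" using Fle[of y] by linarith
      also have "\<dots> \<le> M * norm y powr (- real DIM('a) - \<gamma>)" using Kfar yO by (simp add: OutS_mem)
      finally show ?thesis using True yO by simp
    next
      case False thus ?thesis using prm by simp
    qed
  qed
  have "PV \<le> CH * integral\<^sup>L lebesgue (\<lambda>y::'a. indicator (ball 0 (1/4)) y * norm y powr (-b2))
      + M * integral\<^sup>L lebesgue (\<lambda>y::'a. indicator OutS y * norm y powr (- real DIM('a) - \<gamma>))"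
    using bnd1 bnd2 unfolding PV_def by simp
  moreover have "\<forall>r>0. set_integrable lebesgue ({y. x + y \<in> ball 0 1} - ball 0 r) F"
    using intR unfolding setR set_integrable_def by simp
  ultimately show ?thesis using lim unfolding setR CH_def by blast
qed

end


context kern begin

lemma RHS_lower:
  assumes \<delta>: "0 < \<delta>"
  shows "ennreal (lam * 2 powr (- real DIM('a) - s * p) * \<delta>) \<le>
    (INF A \<in> {A. A \<in> sets lebesgue \<and> A \<subseteq> ball (0::'a) 2 \<and> emeasure lebesgue A > ennreal \<delta>}.
                 (\<integral>\<^sup>+ y\<in>A. ennreal (Kx y) \<partial>lebesgue))"
proof (rule INF_greatest)
  fix A assume "A \<in> {A. A \<in> sets lebesgue \<and> A \<subseteq> ball (0::'a) 2 \<and> emeasure lebesgue A > ennreal \<delta>}"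
  hence A: "A \<in> sets lebesgue" "A \<subseteq> ball 0 2" "emeasure lebesgue A > ennreal \<delta>" by auto
  define c where "c = lam * 2 powr (- real DIM('a) - s * p)"
  have c0: "0 < c" unfolding c_def using prm by simp
  have e0: "- real DIM('a) - s * p \<le> 0"
  proof -
    have "0 \<le> s * p" using prm by simp
    thus ?thesis by linarith
  qed
  have "(\<integral>\<^sup>+ y. ennreal c * indicator A y \<partial>lebesgue) \<le> (\<integral>\<^sup>+ y\<in>A. ennreal (Kx y) \<partial>lebesgue)"
  proof (rule nn_integral_mono_AE)
    show "AE y in lebesgue. ennreal c * indicator A y \<le> ennreal (Kx y) * indicator A y"
      using AE_leb_ne0
    proof eventually_elim
      fix y :: 'a assume y0: "y \<noteq> 0"
      show "ennreal c * indicator A y \<le> ennreal (Kx y) * indicator A y"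
      proof (cases "y \<in> A")
        case True
        hence yn: "norm y < 2" using A(2) by auto
        have "c \<le> lam * norm y powr (- real DIM('a) - s * p)" unfolding c_def
          using yn y0 e0 prm by (intro mult_left_mono powr_mono2') auto
        also have "\<dots> \<le> Kx y" by (rule Klow[OF y0 yn])
        finally show ?thesis using True by (simp add: ennreal_leI)
      next
        case False thus ?thesis by simp
      qed
    qed
  qed
  moreover have "(\<integral>\<^sup>+ y. ennreal c * indicator A y \<partial>lebesgue) = ennreal c * emeasure lebesgue A"
    by (rule nn_integral_cmult_indicator[OF A(1)])
  moreover have "ennreal c * ennreal \<delta> \<le> ennreal c * emeasure lebesgue A"
    using A(3) by (intro mult_left_mono) auto
  ultimately show "ennreal (lam * 2 powr (- real DIM('a) - s * p) * \<delta>) \<le> (\<integral>\<^sup>+ y\<in>A. ennreal (Kx y) \<partial>lebesgue)"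
    using c0 \<delta> unfolding c_def[symmetric] by (simp add: ennreal_mult)
qed

end


lemma alg1:
  fixes kq X BG P1 P2 Q M I J BPV :: real
  assumes "0 \<le> kq * X * BG"
  shows "P2 * kq * BPV + P2 * (P1 * kq * M * I + Q * M * J) + P1 * (M * J)
    \<le> kq * (P2 * BPV + P2 * (P1 * M * I) + X * BG) + (P2 * (Q * M) + P1 * M) * J"
  using assms by (simp add: algebra_simps)

lemma alg2:
  fixes kq X BG P1 P2 Q M I J BPV :: real
  assumes "0 \<le> kq * (P2 * BPV)" "0 \<le> kq * (P2 * (P1 * M * I))" "0 \<le> P2 * (Q * M) * J"
  shows "X * kq * BG + P1 * (M * J)
    \<le> kq * (P2 * BPV + P2 * (P1 * M * I) + X * BG) + (P2 * (Q * M) + P1 * M) * J"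
  using assms by (simp add: algebra_simps)

theorem proposition3p4:
  fixes s p lam Lam M \<gamma> \<delta> :: real
  assumes s: "0 < s" "s < 1"
    and p: "1 < p"
    and p_small: "p < 2 \<Longrightarrow> p > 1 / (1 - s)"
    and lam: "0 < lam" "lam \<le> Lam"
    and M: "0 < M" and \<gamma>: "0 < \<gamma>"
    and \<delta>: "0 < \<delta>"
  shows "\<exists>k \<eta>. 0 < k \<and> k \<le> 1/2 \<and> 0 < \<eta> \<and>
    (\<forall>K :: 'a::euclidean_space \<Rightarrow> 'a \<Rightarrow> real.
      ((\<lambda>z. K (fst z) (snd z)) \<in> borel_measurable (restrict_space borel (ball 0 2 \<times> UNIV))
       \<and> (\<forall>x\<in>ball 0 2. \<forall>y. 0 \<le> K x y)
       \<and> (\<forall>x\<in>ball 0 2. \<forall>y. K x y = K x (- y))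
       \<and> (\<forall>x\<in>ball 0 2. \<forall>y\<in>ball 0 2 - {0}.
             lam * norm y powr (- real DIM('a) - s * p) \<le> K x y
           \<and> K x y \<le> Lam * norm y powr (- real DIM('a) - s * p))
       \<and> (\<forall>x\<in>ball 0 2. \<forall>y. norm y \<ge> 1/4 \<longrightarrow> K x y \<le> M * norm y powr (- real DIM('a) - \<gamma>)))
      \<longrightarrow> (\<forall>x\<in>ball 0 (3/4).
        let RHS = ereal (2 powr (1 - p)) * enn2ereal
              (INF A \<in> {A. A \<in> sets lebesgue \<and> A \<subseteq> ball 0 2 \<and> emeasure lebesgue A > ennreal \<delta>}.
                 (\<integral>\<^sup>+ y\<in>A. ennreal (K x y) \<partial>lebesgue));
            T = (\<lambda>y. (norm (8 *\<^sub>R y) powr \<eta> - 1) powr (p - 1) * K x y);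
            Out = UNIV - ball (0::'a) (1/4)
        in
        (p > 2 \<longrightarrow>
          (\<exists>PV. (\<forall>r>0. set_integrable lebesgue ({y. x + y \<in> ball 0 1} - ball 0 r)
                   (\<lambda>y. \<bar>beta x - beta (x + y)\<bar> powr (p - 2) * (beta x - beta (x + y)) * K x y))
             \<and> ((\<lambda>r. LINT y : ({y. x + y \<in> ball 0 1} - ball 0 r) | lebesgue.
                   \<bar>beta x - beta (x + y)\<bar> powr (p - 2) * (beta x - beta (x + y)) * K x y)
                 \<longlongrightarrow> PV) (at_right 0)
             \<and> set_integrable lebesgue Out
                 (\<lambda>y. \<bar>k * beta x + 2 * (norm (8 *\<^sub>R y) powr \<eta> - 1)\<bar> powr (p - 1) * K x y)
             \<and> set_integrable lebesgue Out T
             \<and> ereal (2 powr (p - 2) * k powr (p - 1) * PV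
                 + 2 powr (p - 2) * (LINT y : Out | lebesgue.
                     \<bar>k * beta x + 2 * (norm (8 *\<^sub>R y) powr \<eta> - 1)\<bar> powr (p - 1) * K x y)
                 + 2 powr (p - 1) * (LINT y : Out | lebesgue. T y)) < RHS))
        \<and> (p < 2 \<longrightarrow>
             integrable lebesgue (\<lambda>y. \<bar>beta x - beta (x + y)\<bar> powr (p - 1) * K x y)
           \<and> set_integrable lebesgue Out T
           \<and> ereal ((3 powr (p - 1) + 2 powr (p - 1)) * k powr (p - 1) *
                 (\<integral>y. \<bar>beta x - beta (x + y)\<bar> powr (p - 1) * K x y \<partial>lebesgue)
               + 2 powr (p - 1) * (LINT y : Out | lebesgue. T y)) < RHS)))"
proof -
  have Lam0: "0 < Lam" using lam by linarith
  define \<epsilon> where "\<epsilon> = 2 powr (1 - p) * (lam * 2 powr (- real DIM('a) - s * p) * \<delta>)"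
  have \<epsilon>0: "0 < \<epsilon>" unfolding \<epsilon>_def using lam \<delta> by simp
  define I\<gamma> where "I\<gamma> = integral\<^sup>L lebesgue (\<lambda>y::'a. indicator OutS y * norm y powr (- real DIM('a) - \<gamma>))"
  define b1 where "b1 = real DIM('a) + s * p - (p - 1)"
  define I1 where "I1 = integral\<^sup>L lebesgue (\<lambda>y::'a. indicator (ball 0 (1/4)) y * norm y powr (-b1))"
  define b2 where "b2 = max 0 (real DIM('a) + s * p - p)"
  define I2 where "I2 = integral\<^sup>L lebesgue (\<lambda>y::'a. indicator (ball 0 (1/4)) y * norm y powr (-b2))"
  have I\<gamma>0: "0 \<le> I\<gamma>" unfolding I\<gamma>_def by (intro Bochner_Integration.integral_nonneg) simp
  have I10: "0 \<le> I1" unfolding I1_def by (intro Bochner_Integration.integral_nonneg) simp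
  have I20: "0 \<le> I2" unfolding I2_def by (intro Bochner_Integration.integral_nonneg) simp
  define BPV where "BPV = 14 * (p - 1) * 8 powr (p - 2) * Lam * I2 + M * I\<gamma>"
  define BG where "BG = 8 powr (p-1) * Lam * I1 + M * I\<gamma>"
  have BPV0: "0 \<le> BPV" unfolding BPV_def using p Lam0 I20 I\<gamma>0 M by simp
  have BG0: "0 \<le> BG" unfolding BG_def using p Lam0 I10 I\<gamma>0 M by simp
  define Ck where "Ck = 2 powr (p - 2) * BPV + 2 powr (p - 2) * (2 powr (p - 1) * M * I\<gamma>)
      + (3 powr (p - 1) + 2 powr (p - 1)) * BG"
  have Ck0: "0 \<le> Ck" unfolding Ck_def using BPV0 BG0 I\<gamma>0 M by simp
  define AJ where "AJ = 2 powr (p - 2) * (4 powr (p - 1) * M) + 2 powr (p - 1) * M"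
  have AJ0: "0 \<le> AJ" unfolding AJ_def using M by simp
  define \<eta>0 where "\<eta>0 = \<gamma> / (2 * (p - 1))"
  have e0: "0 < \<eta>0" using p \<gamma> by (simp add: \<eta>0_def)
  have em: "0 < \<eta>0 / real (Suc m)" "(\<eta>0 / real (Suc m)) * (p - 1) \<le> \<gamma> / 2" for m
  proof -
    show "0 < \<eta>0 / real (Suc m)" using e0 by simp
    have "(\<eta>0 / real (Suc m)) * (p - 1) \<le> \<eta>0 * (p - 1)" using e0 p
      by (intro mult_right_mono) (auto simp: field_simps)
    also have "\<dots> = \<gamma> / 2" using p by (simp add: \<eta>0_def field_simps)
    finally show "(\<eta>0 / real (Suc m)) * (p - 1) \<le> \<gamma> / 2" .
  qed
  have "(\<lambda>m. AJ * integral\<^sup>L lebesgue (Efun p \<gamma> (\<eta>0 / real (Suc m)) :: 'a \<Rightarrow> real)) \<longlonglongrightarrow> AJ * 0"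
    using Efun_lim[OF p \<gamma>, where 'a='a] unfolding \<eta>0_def by (intro tendsto_mult tendsto_const) auto
  from order_tendstoD(2)[OF this, of "\<epsilon>/2"] \<epsilon>0
  obtain m where mJ: "AJ * integral\<^sup>L lebesgue (Efun p \<gamma> (\<eta>0 / real (Suc m)) :: 'a \<Rightarrow> real) < \<epsilon>/2"
    by (auto simp: eventually_sequentially)
  define \<eta> where "\<eta> = \<eta>0 / real (Suc m)"
  define J where "J = integral\<^sup>L lebesgue (Efun p \<gamma> \<eta> :: 'a \<Rightarrow> real)"
  have \<eta>: "0 < \<eta>" "\<eta> * (p - 1) \<le> \<gamma> / 2" unfolding \<eta>_def using em by auto
  have AJJ: "AJ * J < \<epsilon>/2" using mJ unfolding J_def \<eta>_def .
  have J0: "0 \<le> J" unfolding J_def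
    using Efun_bound(1)[OF p \<gamma> \<eta>] by (intro Bochner_Integration.integral_nonneg) auto
  define t where "t = (\<epsilon> / (2 * (Ck + 1))) powr (1 / (p - 1))"
  define k where "k = min (1/2) t"
  have t0: "0 < t" unfolding t_def using \<epsilon>0 Ck0 by simp
  have k: "0 < k" "k \<le> 1/2" unfolding k_def using t0 by auto
  have kp: "k powr (p - 1) \<le> \<epsilon> / (2 * (Ck + 1))"
  proof -
    have "k powr (p - 1) \<le> t powr (p - 1)" using k p unfolding k_def by (intro powr_mono2) auto
    also have "\<dots> = (\<epsilon> / (2 * (Ck + 1))) powr (1 / (p - 1) * (p - 1))" unfolding t_def by (simp add: powr_powr)
    also have "1 / (p - 1) * (p - 1) = 1" using p by simp
    also have "(\<epsilon> / (2 * (Ck + 1))) powr 1 = \<epsilon> / (2 * (Ck + 1))" using \<epsilon>0 Ck0 by simp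
    finally show ?thesis .
  qed
  have kCk: "k powr (p - 1) * Ck < \<epsilon> / 2"
  proof -
    have "k powr (p - 1) * Ck \<le> \<epsilon> / (2 * (Ck + 1)) * Ck" using kp Ck0 by (intro mult_right_mono) auto
    also have "\<dots> < \<epsilon> / 2" using \<epsilon>0 Ck0 by (simp add: field_simps)
    finally show ?thesis .
  qed
  have kp0: "0 \<le> k powr (p - 1)" by simp
  show ?thesis
  proof (rule exI[of _ k], rule exI[of _ \<eta>], intro conjI allI impI ballI)
    show "0 < k" "k \<le> 1/2" "0 < \<eta>" using k \<eta> by auto
    fix K :: "'a \<Rightarrow> 'a \<Rightarrow> real" and x :: 'a
    assume hyp: "((\<lambda>z. K (fst z) (snd z)) \<in> borel_measurable (restrict_space borel (ball 0 2 \<times> UNIV))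
       \<and> (\<forall>x\<in>ball 0 2. \<forall>y. 0 \<le> K x y)
       \<and> (\<forall>x\<in>ball 0 2. \<forall>y. K x y = K x (- y))
       \<and> (\<forall>x\<in>ball 0 2. \<forall>y\<in>ball 0 2 - {0}.
             lam * norm y powr (- real DIM('a) - s * p) \<le> K x y
           \<and> K x y \<le> Lam * norm y powr (- real DIM('a) - s * p))
       \<and> (\<forall>x\<in>ball 0 2. \<forall>y. norm y \<ge> 1/4 \<longrightarrow> K x y \<le> M * norm y powr (- real DIM('a) - \<gamma>)))"
    assume xb: "x \<in> ball 0 (3/4)"
    have x2: "x \<in> ball 0 2" using xb by auto
    note h1 = conjunct1[OF hyp]
    note h2 = conjunct1[OF conjunct2[OF hyp]]
    note h3 = conjunct1[OF conjunct2[OF conjunct2[OF hyp]]]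
    note h4 = conjunct1[OF conjunct2[OF conjunct2[OF conjunct2[OF hyp]]]]
    note h5 = conjunct2[OF conjunct2[OF conjunct2[OF conjunct2[OF hyp]]]]
    have xn: "norm x < 3/4" using xb by simp
    interpret kern "K x" s p lam Lam M \<gamma>
    proof
      have "K x \<in> borel_measurable borel"
      proof -
        have "(\<lambda>y::'a. (x, y)) \<in> borel \<rightarrow>\<^sub>M borel"
          by (intro borel_measurable_continuous_onI continuous_intros)
        hence "(\<lambda>y::'a. (x, y)) \<in> borel \<rightarrow>\<^sub>M restrict_space borel (ball 0 2 \<times> UNIV)"
          using x2 by (intro measurable_restrict_space2) auto
        from measurable_compose[OF this h1] show ?thesis by simp
      qed
      thus "K x \<in> borel_measurable borel" .
      show "\<And>y. 0 \<le> K x y" using h2 x2 by blast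
      show "\<And>y. K x (- y) = K x y" using h3 x2 by (metis minus_minus)
      show "\<And>y. y \<noteq> 0 \<Longrightarrow> norm y < 2 \<Longrightarrow> lam * norm y powr (- real DIM('a) - s * p) \<le> K x y"
        using h4 x2 by simp
      show "\<And>y. y \<noteq> 0 \<Longrightarrow> norm y < 2 \<Longrightarrow> K x y \<le> Lam * norm y powr (- real DIM('a) - s * p)"
        using h4 x2 by simp
      show "\<And>y. 1/4 \<le> norm y \<Longrightarrow> K x y \<le> M * norm y powr (- real DIM('a) - \<gamma>)"
        using h5 x2 by simp
    qed (use s p lam M \<gamma> in simp_all)
    have RHSl: "ereal L < ereal (2 powr (1 - p)) * enn2ereal
              (INF A \<in> {A. A \<in> sets lebesgue \<and> A \<subseteq> ball 0 2 \<and> emeasure lebesgue A > ennreal \<delta>}.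
                 (\<integral>\<^sup>+ y\<in>A. ennreal (K x y) \<partial>lebesgue))" if "L < \<epsilon>" for L
      using that RHS_lower[OF \<delta>] lam \<delta> unfolding \<epsilon>_def
      by (intro ereal_fin_ineq) auto
    have Out_eq: "UNIV - ball (0::'a) (1/4) = OutS" by (simp add: OutS_def)
    obtain Tint: "set_integrable lebesgue OutS (\<lambda>y. (norm (8 *\<^sub>R y) powr \<eta> - 1) powr (p - 1) * K x y)"
      and Tbnd: "(LINT y : OutS | lebesgue. (norm (8 *\<^sub>R y) powr \<eta> - 1) powr (p - 1) * K x y) \<le> M * J"
      using T_part[OF \<eta>] unfolding J_def by blast
    show "let RHS = ereal (2 powr (1 - p)) * enn2ereal
              (INF A \<in> {A. A \<in> sets lebesgue \<and> A \<subseteq> ball 0 2 \<and> emeasure lebesgue A > ennreal \<delta>}.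
                 (\<integral>\<^sup>+ y\<in>A. ennreal (K x y) \<partial>lebesgue));
            T = (\<lambda>y. (norm (8 *\<^sub>R y) powr \<eta> - 1) powr (p - 1) * K x y);
            Out = UNIV - ball (0::'a) (1/4)
        in
        (p > 2 \<longrightarrow>
          (\<exists>PV. (\<forall>r>0. set_integrable lebesgue ({y. x + y \<in> ball 0 1} - ball 0 r)
                   (\<lambda>y. \<bar>beta x - beta (x + y)\<bar> powr (p - 2) * (beta x - beta (x + y)) * K x y))
             \<and> ((\<lambda>r. LINT y : ({y. x + y \<in> ball 0 1} - ball 0 r) | lebesgue.
                   \<bar>beta x - beta (x + y)\<bar> powr (p - 2) * (beta x - beta (x + y)) * K x y)
                 \<longlongrightarrow> PV) (at_right 0)
             \<and> set_integrable lebesgue Out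
                 (\<lambda>y. \<bar>k * beta x + 2 * (norm (8 *\<^sub>R y) powr \<eta> - 1)\<bar> powr (p - 1) * K x y)
             \<and> set_integrable lebesgue Out T
             \<and> ereal (2 powr (p - 2) * k powr (p - 1) * PV
                 + 2 powr (p - 2) * (LINT y : Out | lebesgue.
                     \<bar>k * beta x + 2 * (norm (8 *\<^sub>R y) powr \<eta> - 1)\<bar> powr (p - 1) * K x y)
                 + 2 powr (p - 1) * (LINT y : Out | lebesgue. T y)) < RHS))
        \<and> (p < 2 \<longrightarrow>
             integrable lebesgue (\<lambda>y. \<bar>beta x - beta (x + y)\<bar> powr (p - 1) * K x y)
           \<and> set_integrable lebesgue Out T
           \<and> ereal ((3 powr (p - 1) + 2 powr (p - 1)) * k powr (p - 1) *
                 (\<integral>y. \<bar>beta x - beta (x + y)\<bar> powr (p - 1) * K x y \<partial>lebesgue)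
               + 2 powr (p - 1) * (LINT y : Out | lebesgue. T y)) < RHS)"
      unfolding Let_def Out_eq
    proof (intro conjI impI)
      assume p2: "2 < p"
      obtain PV where PV: "\<forall>r>0. set_integrable lebesgue ({y. x + y \<in> ball 0 1} - ball 0 r)
                   (\<lambda>y. \<bar>beta x - beta (x + y)\<bar> powr (p - 2) * (beta x - beta (x + y)) * K x y)"
        "((\<lambda>r. LINT y : ({y. x + y \<in> ball 0 1} - ball 0 r) | lebesgue.
                   \<bar>beta x - beta (x + y)\<bar> powr (p - 2) * (beta x - beta (x + y)) * K x y)
                 \<longlongrightarrow> PV) (at_right 0)"
        "PV \<le> BPV"
        using PV_part[OF xn p2] unfolding BPV_def I2_def b2_def I\<gamma>_def by blast
      obtain S2int: "set_integrable lebesgue OutS (\<lambda>y. \<bar>k * beta x + 2 * (norm (8 *\<^sub>R y) powr \<eta> - 1)\<bar> powr (p - 1) * K x y)"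
        and S2bnd: "(LINT y : OutS | lebesgue. \<bar>k * beta x + 2 * (norm (8 *\<^sub>R y) powr \<eta> - 1)\<bar> powr (p - 1) * K x y)
           \<le> 2 powr (p-1) * k powr (p-1) * M * I\<gamma> + 4 powr (p-1) * M * J"
        using S2_part[OF \<eta> k, of x] unfolding J_def I\<gamma>_def by blast
      define L where "L = 2 powr (p - 2) * k powr (p - 1) * PV
                 + 2 powr (p - 2) * (LINT y : OutS | lebesgue.
                     \<bar>k * beta x + 2 * (norm (8 *\<^sub>R y) powr \<eta> - 1)\<bar> powr (p - 1) * K x y)
                 + 2 powr (p - 1) * (LINT y : OutS | lebesgue. (norm (8 *\<^sub>R y) powr \<eta> - 1) powr (p - 1) * K x y)"
      have "L \<le> 2 powr (p - 2) * k powr (p - 1) * BPV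
          + 2 powr (p - 2) * (2 powr (p-1) * k powr (p-1) * M * I\<gamma> + 4 powr (p-1) * M * J)
          + 2 powr (p - 1) * (M * J)"
        unfolding L_def using PV(3) S2bnd Tbnd
        by (intro add_mono mult_left_mono) auto
      also have "\<dots> \<le> k powr (p - 1) * Ck + AJ * J"
        unfolding Ck_def AJ_def by (rule alg1) (use kp0 BG0 in simp)
      also have "\<dots> < \<epsilon>" using kCk AJJ by simp
      finally have "L < \<epsilon>" .
      from RHSl[OF this] show "\<exists>PV. (\<forall>r>0. set_integrable lebesgue ({y. x + y \<in> ball 0 1} - ball 0 r)
                   (\<lambda>y. \<bar>beta x - beta (x + y)\<bar> powr (p - 2) * (beta x - beta (x + y)) * K x y))
             \<and> ((\<lambda>r. LINT y : ({y. x + y \<in> ball 0 1} - ball 0 r) | lebesgue.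
                   \<bar>beta x - beta (x + y)\<bar> powr (p - 2) * (beta x - beta (x + y)) * K x y)
                 \<longlongrightarrow> PV) (at_right 0)
             \<and> set_integrable lebesgue OutS
                 (\<lambda>y. \<bar>k * beta x + 2 * (norm (8 *\<^sub>R y) powr \<eta> - 1)\<bar> powr (p - 1) * K x y)
             \<and> set_integrable lebesgue OutS (\<lambda>y. (norm (8 *\<^sub>R y) powr \<eta> - 1) powr (p - 1) * K x y)
             \<and> ereal (2 powr (p - 2) * k powr (p - 1) * PV
                 + 2 powr (p - 2) * (LINT y : OutS | lebesgue.
                     \<bar>k * beta x + 2 * (norm (8 *\<^sub>R y) powr \<eta> - 1)\<bar> powr (p - 1) * K x y)
                 + 2 powr (p - 1) * (LINT y : OutS | lebesgue. (norm (8 *\<^sub>R y) powr \<eta> - 1) powr (p - 1) * K x y))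
               < ereal (2 powr (1 - p)) * enn2ereal
              (INF A \<in> {A. A \<in> sets lebesgue \<and> A \<subseteq> ball 0 2 \<and> emeasure lebesgue A > ennreal \<delta>}.
                 (\<integral>\<^sup>+ y\<in>A. ennreal (K x y) \<partial>lebesgue))"
        using PV(1,2) S2int Tint unfolding L_def by blast
    next
      assume p2: "p < 2"
      have pc: "1 < p * (1 - s)" using p_small[OF p2] s by (simp add: field_simps)
      have xn1: "norm x < 1" using xn by simp
      note GP = G_part[OF xn1 p2 pc]
      show "integrable lebesgue (\<lambda>y. \<bar>beta x - beta (x + y)\<bar> powr (p - 1) * K x y)" by (rule GP(1))
      show "set_integrable lebesgue OutS (\<lambda>y. (norm (8 *\<^sub>R y) powr \<eta> - 1) powr (p - 1) * K x y)" by (rule Tint)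
      have Gb: "(\<integral>y. \<bar>beta x - beta (x + y)\<bar> powr (p - 1) * K x y \<partial>lebesgue) \<le> BG"
        using GP(2) unfolding BG_def I1_def b1_def I\<gamma>_def .
      define L where "L = (3 powr (p - 1) + 2 powr (p - 1)) * k powr (p - 1) *
                 (\<integral>y. \<bar>beta x - beta (x + y)\<bar> powr (p - 1) * K x y \<partial>lebesgue)
               + 2 powr (p - 1) * (LINT y : OutS | lebesgue. (norm (8 *\<^sub>R y) powr \<eta> - 1) powr (p - 1) * K x y)"
      have "L \<le> (3 powr (p - 1) + 2 powr (p - 1)) * k powr (p - 1) * BG + 2 powr (p - 1) * (M * J)"
        unfolding L_def using Gb Tbnd by (intro add_mono mult_left_mono) auto
      also have "\<dots> \<le> k powr (p - 1) * Ck + AJ * J"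
        unfolding Ck_def AJ_def by (rule alg2) (use kp0 BPV0 I\<gamma>0 M J0 in simp_all)
      also have "\<dots> < \<epsilon>" using kCk AJJ by simp
      finally have "L < \<epsilon>" .
      from RHSl[OF this] show "ereal ((3 powr (p - 1) + 2 powr (p - 1)) * k powr (p - 1) *
                 (\<integral>y. \<bar>beta x - beta (x + y)\<bar> powr (p - 1) * K x y \<partial>lebesgue)
               + 2 powr (p - 1) * (LINT y : OutS | lebesgue. (norm (8 *\<^sub>R y) powr \<eta> - 1) powr (p - 1) * K x y))
               < ereal (2 powr (1 - p)) * enn2ereal
              (INF A \<in> {A. A \<in> sets lebesgue \<and> A \<subseteq> ball 0 2 \<and> emeasure lebesgue A > ennreal \<delta>}.
                 (\<integral>\<^sup>+ y\<in>A. ennreal (K x y) \<partial>lebesgue))"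
        unfolding L_def .
    qed
  qed
qed


end
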